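(* Let $F_{ij}$ ($0\le i\le m$, $0\le j\le n$) be an $m\times n$ generalized T-net in $I^3$. Then, up to interchanging the indices $i$ and $j$, there exist $a_0,\dots,a_{m+1},b_0,\dots,b_{n+1}\in\mathbb{R}^3$ and $\sigma_0,\dots,\sigma_{m+1}>0$ such that, with $\Delta_{ij}:=a_{i+1}-a_i+b_j(\sigma_{i+1}-\sigma_i)$, we have $\det(e_3,b_{j+1}-b_j,\Delta_{ij})\ne0$ for all $0\le i\le m$, $0\le j\le n$ and $$F_{ij}=-\frac{1}{\det(e_3,b_{j+1}-b_j,\Delta_{ij})}\begin{pmatrix}\det(e_1,b_{j+1}-b_j,\Delta_{ij})\\ \det(e_2,b_{j+1}-b_j,\Delta_{ij})\\ \det(a_i+\sigma_ib_j,b_{j+1}-b_j,\Delta_{ij})\end{pmatrix}.$$ Moreover, for some $\varepsilon>0$ the family $$F_{ij}(t)=-\frac{1}{\det(e_3,b_{j+1}-b_j,\Delta_{ij})}\begin{pmatrix}\det(e_1,b_{j+1}-b_j,\Delta_{ij})\\ \det(e_2,b_{j+1}-b_j,\Delta_{ij})\\ \det(P_{ij}(t),b_{j+1}-b_j,\Delta_{ij})\end{pmatrix},\quad t\in[0,\varepsilon],$$ where $$P_{ij}(t)=a_0+\sum_{k=1}^{i}\frac{(a_k-a_{k-1})(\sigma_k+\sigma_{k-1})}{\sqrt{t+\sigma_k^2}+\sqrt{t+\sigma_{k-1}^2}}+\sqrt{t+\sigma_i^2}\,b_j,$$ is a nontrivial isotropic isometric deformation of $F_{ij}$.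
   Context: $I^3$ is $\mathbb{R}^3$ with coordinates $(x,y,z)$, $e_1=(1,0,0)^T,e_2=(0,1,0)^T,e_3=(0,0,1)^T$; a line or plane is isotropic if parallel to the $z$-axis; top view of $(x,y,z)$ is $(x,y)$. Isotropic congruences: maps $\mathbf{x}\mapsto A\mathbf{x}+\mathbf{b}$, $A=\begin{pmatrix}\cos\phi&-\sin\phi&0\\ \sin\phi&\cos\phi&0\\ c_1&c_2&1\end{pmatrix}$. Metric duality: point $P=(P^1,P^2,P^3)\leftrightarrow$ plane $P^*\colon z=P^1x+P^2y-P^3$. An $m\times n$ net: points $F_{ij}$, $0\le i\le m,0\le j\le n$, with $F_{ij},F_{i+1,j},F_{i+1,j+1},F_{i,j+1}$ consecutive vertices of a convex planar quadrilateral (face $p_{ij}$) for all $0\le i<m,0\le j<n$. Its parameter lines are the broken lines $F_{i0}\dots F_{in}$ ($0\le i\le m$) and $F_{0j}\dots F_{mj}$ ($0\le j\le n$). Boundary vertices: $i\in\{0,m\}$ or $j\in\{0,n\}$; consecutive faces around non-boundary $F_{ij}$: $p_{i-1,j-1},p_{i,j-1},p_{ij},p_{i-1,j}$. Convex 4-hedral angle with vertex $O$: union of rays from $O$ meeting a convex quadrilateral in a plane not through $O$; flat angles: rays through one side; admissible: isotropic line through $O$ meets its interior. Dual-convex: $m,n\ge2$ and at each non-boundary vertex the four consecutive face planes are the planes of four consecutive flat angles of an admissible convex 4-hedral angle. A generalized T-net is a dual-convex $m\times n$ net all of whose parameter lines are planar (each lies in a plane), the parameter lines of one family lying in isotropic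 planes. Curvature at non-boundary vertex with consecutive faces $p_1..p_4$: $\Omega=\frac12\sum_{k=1}^4\det(\overline{p_k^*},\overline{p_{k+1}^*})$, $p_5=p_1$. An isotropic isometric deformation of a dual-convex net $F_{ij}$ is a continuous family of $m\times n$ nets $F_{ij}(t)$ with $F_{ij}(0)=F_{ij}$, corresponding faces isotropically congruent, and equal curvatures at corresponding non-boundary vertices; it is nontrivial if not for every $t$ is there an isotropic congruence $C_t$ with $F_{ij}(t)=C_t(F_{ij})$ for all $i,j$. *)

theory Defs
  imports "HOL-Analysis.Analysis"
begin

type_synonym point = "real^3"

definition e1 :: point where "e1 = vector [1, 0, 0]"
definition e2 :: point where "e2 = vector [0, 1, 0]"
definition e3 :: point where "e3 = vector [0, 0, 1]"

definition det3 :: "point \<Rightarrow> point \<Rightarrow> point \<Rightarrow> real" where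
  "det3 u v w = det (transpose (vector [u, v, w] :: real^3^3))"

definition det2top :: "point \<Rightarrow> point \<Rightarrow> real" where
  "det2top p q = p$1 * q$2 - p$2 * q$1"

definition iso_congruence :: "(point \<Rightarrow> point) \<Rightarrow> bool" where
  "iso_congruence C \<longleftrightarrow> (\<exists>\<phi> c1 c2 (b::point).
     C = (\<lambda>x. (vector [vector [cos \<phi>, - sin \<phi>, 0],
                        vector [sin \<phi>, cos \<phi>, 0],
                        vector [c1, c2, 1]] :: real^3^3) *v x + b))"

text \<open>A, B, C, D are consecutive vertices of a convex planar quadrilateral:
  the (open) diagonals cross and the four points are not collinear.\<close>
definition convex_quad :: "point \<Rightarrow> point \<Rightarrow> point \<Rightarrow> point \<Rightarrow> bool" where
  "convex_quad A B C D \<longleftrightarrow>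
     open_segment A C \<inter> open_segment B D \<noteq> {} \<and> \<not> collinear {A, B, C, D}"

definition is_net :: "(nat \<Rightarrow> nat \<Rightarrow> point) \<Rightarrow> nat \<Rightarrow> nat \<Rightarrow> bool" where
  "is_net F m n \<longleftrightarrow> (\<forall>i<m. \<forall>j<n.
     convex_quad (F i j) (F (Suc i) j) (F (Suc i) (Suc j)) (F i (Suc j)))"

definition face_plane :: "(nat \<Rightarrow> nat \<Rightarrow> point) \<Rightarrow> nat \<Rightarrow> nat \<Rightarrow> point set" where
  "face_plane F i j = affine hull {F i j, F (Suc i) j, F (Suc i) (Suc j), F i (Suc j)}"

definition hedral_angle :: "point \<Rightarrow> point \<Rightarrow> point \<Rightarrow> point \<Rightarrow> point \<Rightarrow> point set" where
  "hedral_angle V Q1 Q2 Q3 Q4 =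
     {V + t *\<^sub>R (q - V) | t q. t \<ge> 0 \<and> q \<in> convex hull {Q1, Q2, Q3, Q4}}"

definition admissible_angle :: "point \<Rightarrow> point \<Rightarrow> point \<Rightarrow> point \<Rightarrow> point \<Rightarrow> bool" where
  "admissible_angle V Q1 Q2 Q3 Q4 \<longleftrightarrow>
     convex_quad Q1 Q2 Q3 Q4 \<and> V \<notin> affine hull {Q1, Q2, Q3, Q4} \<and>
     (\<exists>s. V + s *\<^sub>R e3 \<in> interior (hedral_angle V Q1 Q2 Q3 Q4))"

text \<open>The plane of the flat angle through side Q Q' is affine hull {V, Q, Q'}.\<close>
definition dual_convex :: "(nat \<Rightarrow> nat \<Rightarrow> point) \<Rightarrow> nat \<Rightarrow> nat \<Rightarrow> bool" where
  "dual_convex F m n \<longleftrightarrow> m \<ge> 2 \<and> n \<ge> 2 \<and>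
     (\<forall>i j. 0 < i \<and> i < m \<and> 0 < j \<and> j < n \<longrightarrow>
        (\<exists>V Q1 Q2 Q3 Q4. admissible_angle V Q1 Q2 Q3 Q4 \<and>
           face_plane F (i-1) (j-1) = affine hull {V, Q1, Q2} \<and>
           face_plane F i (j-1) = affine hull {V, Q2, Q3} \<and>
           face_plane F i j = affine hull {V, Q3, Q4} \<and>
           face_plane F (i-1) j = affine hull {V, Q4, Q1}))"

definition lies_in_plane :: "point set \<Rightarrow> bool" where
  "lies_in_plane S \<longleftrightarrow> (\<exists>(a::point) c. a \<noteq> 0 \<and> S \<subseteq> {x. a \<bullet> x = c})"

definition lies_in_isotropic_plane :: "point set \<Rightarrow> bool" where
  "lies_in_isotropic_plane S \<longleftrightarrow>
     (\<exists>(a::point) c. a \<noteq> 0 \<and> a$3 = 0 \<and> S \<subseteq> {x. a \<bullet> x = c})"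

definition gen_T_net :: "(nat \<Rightarrow> nat \<Rightarrow> point) \<Rightarrow> nat \<Rightarrow> nat \<Rightarrow> bool" where
  "gen_T_net F m n \<longleftrightarrow> is_net F m n \<and> dual_convex F m n \<and>
     (\<forall>i\<le>m. lies_in_plane {F i j | j. j \<le> n}) \<and>
     (\<forall>j\<le>n. lies_in_plane {F i j | i. i \<le> m}) \<and>
     ((\<forall>i\<le>m. lies_in_isotropic_plane {F i j | j. j \<le> n}) \<or>
      (\<forall>j\<le>n. lies_in_isotropic_plane {F i j | i. i \<le> m}))"

text \<open>Metric dual point P* of a (non-isotropic) plane z = P1 x + P2 y - P3.\<close>
definition plane_dual :: "point set \<Rightarrow> point" where
  "plane_dual p = (THE P. p = {x. x$3 = P$1 * x$1 + P$2 * x$2 - P$3})"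

definition face_dual :: "(nat \<Rightarrow> nat \<Rightarrow> point) \<Rightarrow> nat \<Rightarrow> nat \<Rightarrow> point" where
  "face_dual F i j = plane_dual (face_plane F i j)"

definition curvature :: "(nat \<Rightarrow> nat \<Rightarrow> point) \<Rightarrow> nat \<Rightarrow> nat \<Rightarrow> real" where
  "curvature F i j =
    (let d1 = face_dual F (i-1) (j-1); d2 = face_dual F i (j-1);
         d3 = face_dual F i j; d4 = face_dual F (i-1) j
     in (det2top d1 d2 + det2top d2 d3 + det2top d3 d4 + det2top d4 d1) / 2)"

definition iso_isometric_deformation ::
  "(nat \<Rightarrow> nat \<Rightarrow> point) \<Rightarrow> nat \<Rightarrow> nat \<Rightarrow> real \<Rightarrow> (real \<Rightarrow> nat \<Rightarrow> nat \<Rightarrow> point) \<Rightarrow> bool" where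
  "iso_isometric_deformation F m n \<epsilon> Ft \<longleftrightarrow> \<epsilon> > 0 \<and>
     (\<forall>i\<le>m. \<forall>j\<le>n. continuous_on {0..\<epsilon>} (\<lambda>t. Ft t i j) \<and> Ft 0 i j = F i j) \<and>
     (\<forall>t\<in>{0..\<epsilon>}.
        is_net (Ft t) m n \<and>
        (\<forall>i<m. \<forall>j<n. \<exists>C. iso_congruence C \<and>
            C (F i j) = Ft t i j \<and> C (F (Suc i) j) = Ft t (Suc i) j \<and>
            C (F (Suc i) (Suc j)) = Ft t (Suc i) (Suc j) \<and> C (F i (Suc j)) = Ft t i (Suc j)) \<and>
        (\<forall>i j. 0 < i \<and> i < m \<and> 0 < j \<and> j < n \<longrightarrow> curvature (Ft t) i j = curvature F i j))"

definition nontrivial_deformation ::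
  "(nat \<Rightarrow> nat \<Rightarrow> point) \<Rightarrow> nat \<Rightarrow> nat \<Rightarrow> real \<Rightarrow> (real \<Rightarrow> nat \<Rightarrow> nat \<Rightarrow> point) \<Rightarrow> bool" where
  "nontrivial_deformation F m n \<epsilon> Ft \<longleftrightarrow>
     \<not> (\<forall>t\<in>{0..\<epsilon>}. \<exists>C. iso_congruence C \<and> (\<forall>i\<le>m. \<forall>j\<le>n. Ft t i j = C (F i j)))"

definition Tdelta :: "(nat \<Rightarrow> point) \<Rightarrow> (nat \<Rightarrow> point) \<Rightarrow> (nat \<Rightarrow> real) \<Rightarrow> nat \<Rightarrow> nat \<Rightarrow> point" where
  "Tdelta a b \<sigma> i j = a (Suc i) - a i + (\<sigma> (Suc i) - \<sigma> i) *\<^sub>R b j"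

definition Tpoint :: "(nat \<Rightarrow> point) \<Rightarrow> (nat \<Rightarrow> point) \<Rightarrow> (nat \<Rightarrow> real) \<Rightarrow> point \<Rightarrow> nat \<Rightarrow> nat \<Rightarrow> point" where
  "Tpoint a b \<sigma> p i j =
     (let db = b (Suc j) - b j; \<Delta> = Tdelta a b \<sigma> i j
      in (- 1 / det3 e3 db \<Delta>) *\<^sub>R vector [det3 e1 db \<Delta>, det3 e2 db \<Delta>, det3 p db \<Delta>])"

definition Tpath :: "(nat \<Rightarrow> point) \<Rightarrow> (nat \<Rightarrow> point) \<Rightarrow> (nat \<Rightarrow> real) \<Rightarrow> real \<Rightarrow> nat \<Rightarrow> nat \<Rightarrow> point" where
  "Tpath a b \<sigma> t i j =
     a 0 + (\<Sum>k\<in>{1..i}. ((\<sigma> k + \<sigma> (k-1)) / (sqrt (t + (\<sigma> k)^2) + sqrt (t + (\<sigma> (k-1))^2)))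
                          *\<^sub>R (a k - a (k-1)))
         + sqrt (t + (\<sigma> i)^2) *\<^sub>R b j"

text \<open>The conclusion of the proposition for a given indexing of the net.\<close>
definition T_representation :: "(nat \<Rightarrow> nat \<Rightarrow> point) \<Rightarrow> nat \<Rightarrow> nat \<Rightarrow> bool" where
  "T_representation F m n \<longleftrightarrow>
     (\<exists>(a::nat \<Rightarrow> point) (b::nat \<Rightarrow> point) (\<sigma>::nat \<Rightarrow> real).
        (\<forall>k\<le>Suc m. \<sigma> k > 0) \<and>
        (\<forall>i\<le>m. \<forall>j\<le>n. det3 e3 (b (Suc j) - b j) (Tdelta a b \<sigma> i j) \<noteq> 0 \<and>
                         F i j = Tpoint a b \<sigma> (a i + \<sigma> i *\<^sub>R b j) i j) \<and>
        (\<exists>\<epsilon>>0. iso_isometric_deformation F m n \<epsilon> (\<lambda>t i j. Tpoint a b \<sigma> (Tpath a b \<sigma> t i j) i j) \<and>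
                nontrivial_deformation F m n \<epsilon> (\<lambda>t i j. Tpoint a b \<sigma> (Tpath a b \<sigma> t i j) i j)))"

end

theory Submission
  imports Defs
begin

lemma e_comps[simp]:
  "e1$1 = 1" "e1$2 = 0" "e1$3 = 0"
  "e2$1 = 0" "e2$2 = 1" "e2$3 = 0"
  "e3$1 = 0" "e3$2 = 0" "e3$3 = 1"
  by (simp_all add: e1_def e2_def e3_def)

lemma det3_expand:
  "det3 u v w = u$1*(v$2*w$3 - v$3*w$2) - u$2*(v$1*w$3 - v$3*w$1) + u$3*(v$1*w$2 - v$2*w$1)"
  unfolding det3_def det_3 by (simp add: transpose_def algebra_simps)

definition hh :: "point \<Rightarrow> point \<Rightarrow> real" where "hh F x = F$1*x$1 + F$2*x$2 - x$3"
definition gr :: "point \<Rightarrow> point set" where "gr D = {x. x$3 = D$1*x$1 + D$2*x$2 - D$3}"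

lemma in_gr: "x \<in> gr D \<longleftrightarrow> hh x D = x$3"
  unfolding gr_def hh_def by (auto simp: mult.commute)

lemma hh_add: "hh F (x + y) = hh F x + hh F y" by (simp add: hh_def algebra_simps)
lemma hh_diff: "hh F (x - y) = hh F x - hh F y" by (simp add: hh_def algebra_simps)
lemma hh_scale: "hh F (c *\<^sub>R x) = c * hh F x" by (simp add: hh_def algebra_simps)
lemma hh_zero[simp]: "hh F 0 = 0" by (simp add: hh_def)

definition TP :: "point \<Rightarrow> point \<Rightarrow> point \<Rightarrow> point" where
  "TP p u v = (- 1 / det3 e3 u v) *\<^sub>R vector [det3 e1 u v, det3 e2 u v, det3 p u v]"

lemma Tpoint_TP: "Tpoint a b \<sigma> p i j = TP p (b (Suc j) - b j) (Tdelta a b \<sigma> i j)"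
  by (simp add: Tpoint_def TP_def Let_def)

lemma TP_comps:
  "TP p u v $ 1 = - det3 e1 u v / det3 e3 u v"
  "TP p u v $ 2 = - det3 e2 u v / det3 e3 u v"
  "TP p u v $ 3 = - det3 p u v / det3 e3 u v"
  by (simp_all add: TP_def)

lemma det3_lin1: "det3 x u v = x$1 * det3 e1 u v + x$2 * det3 e2 u v + x$3 * det3 e3 u v"
  by (simp add: det3_expand algebra_simps)

lemma TP_hh_gen:
  assumes "det3 e3 u v \<noteq> 0"
  shows "hh (TP p u v) x = - det3 x u v / det3 e3 u v"
proof -
  have "hh (TP p u v) x = (- det3 e1 u v * x$1 - det3 e2 u v * x$2 - det3 e3 u v * x$3) / det3 e3 u v"
    using assms by (simp add: hh_def TP_comps field_simps)
  also have "\<dots> = - det3 x u v / det3 e3 u v"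
    by (subst det3_lin1[of x]) (simp add: algebra_simps)
  finally show ?thesis .
qed

lemma det3_rep[simp]: "det3 u u v = 0" "det3 v u v = 0"
  by (simp_all add: det3_expand algebra_simps)

lemma TP_hh:
  assumes "det3 e3 u v \<noteq> 0"
  shows "hh (TP p u v) u = 0" "hh (TP p u v) v = 0" "hh (TP p u v) p = TP p u v $ 3"
  using assms by (simp_all add: TP_hh_gen TP_comps)

lemma det3_diff1: "det3 (q - p) u v = det3 q u v - det3 p u v"
  by (simp add: det3_expand algebra_simps)

lemma TP_shift:
  assumes "det3 e3 u v \<noteq> 0"
  shows "TP q u v = TP p u v + hh (TP p u v) (q - p) *\<^sub>R e3"
  using assms by (simp add: vec_eq_iff forall_3 TP_comps TP_hh_gen det3_diff1 diff_divide_distrib)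

lemma TP_hh_comb:
  assumes "det3 e3 u v \<noteq> 0"
  shows "hh (TP p u v) (p + \<alpha> *\<^sub>R u + \<beta> *\<^sub>R v) = TP p u v $ 3"
  using TP_hh[OF assms] by (simp add: hh_add hh_scale)

lemma det2top_shoelace:
  fixes A d w :: point
  shows "det2top A (A + c *\<^sub>R d) + det2top (A + c *\<^sub>R d) (A + c *\<^sub>R d + s' *\<^sub>R w)
         + det2top (A + c *\<^sub>R d + s' *\<^sub>R w) (A + s *\<^sub>R w) + det2top (A + s *\<^sub>R w) A
       = c * (s + s') * det2top d w"
  by (simp add: det2top_def algebra_simps)

lemma hh_three_zero:
  assumes "hh A z = 0" "hh B z = 0" "hh C z = 0" "det2top (B - A) (C - A) \<noteq> 0"
  shows "z = 0"
proof -
  let ?p1 = "(B - A)$1" and ?p2 = "(B - A)$2" and ?q1 = "(C - A)$1" and ?q2 = "(C - A)$2"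
  have e1: "?p1 * z$1 + ?p2 * z$2 = 0" using assms(1,2) by (simp add: hh_def algebra_simps)
  have e2: "?q1 * z$1 + ?q2 * z$2 = 0" using assms(1,3) by (simp add: hh_def algebra_simps)
  have d: "?p1 * ?q2 - ?p2 * ?q1 \<noteq> 0" using assms(4) by (simp add: det2top_def)
  have "z$1 * (?p1 * ?q2 - ?p2 * ?q1) = ?q2 * (?p1 * z$1 + ?p2 * z$2) - ?p2 * (?q1 * z$1 + ?q2 * z$2)"
    by (simp add: algebra_simps)
  then have z1: "z$1 = 0" using e1 e2 d by simp
  have "z$2 * (?p1 * ?q2 - ?p2 * ?q1) = ?p1 * (?q1 * z$1 + ?q2 * z$2) - ?q1 * (?p1 * z$1 + ?p2 * z$2)"
    by (simp add: algebra_simps)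
  then have z2: "z$2 = 0" using e1 e2 d by simp
  have z3: "z$3 = 0" using assms(1) z1 z2 by (simp add: hh_def)
  show ?thesis using z1 z2 z3 by (simp add: vec_eq_iff forall_3)
qed


lemma cq_noncol:
  assumes "convex_quad A B C D"
  shows "\<not> collinear {A, B, C}"
proof
  assume col: "collinear {A, B, C}"
  from assms obtain X where X1: "X \<in> open_segment A C" and X2: "X \<in> open_segment B D"
    and nc: "\<not> collinear {A, B, C, D}" unfolding convex_quad_def by blast
  have AC: "A \<noteq> C" using X1 by auto
  let ?L = "affine hull {A, C}"
  have aff: "affine ?L" by simp
  have "collinear {A, C, B}" using col by (simp add: insert_commute)
  then have B: "B \<in> ?L" using collinear_3_affine_hull[OF AC] by blast
  have X: "X \<in> ?L" using X1 open_closed_segment segment_convex_hull convex_hull_subset_affine_hull by blast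
  from X2 obtain u where u: "0 < u" "u < 1" "X = (1 - u) *\<^sub>R B + u *\<^sub>R D" by (auto simp: in_segment)
  have uD: "u *\<^sub>R D = X - (1 - u) *\<^sub>R B" using u(3) by (simp add: algebra_simps)
  have "D = (1/u) *\<^sub>R (u *\<^sub>R D)" using u by simp
  also have "\<dots> = (1/u) *\<^sub>R X + (1 - 1/u) *\<^sub>R B"
    using u(1) by (simp add: uD algebra_simps diff_divide_distrib)
  finally have "D = (1/u) *\<^sub>R X + (1 - 1/u) *\<^sub>R B" .
  then have D: "D \<in> ?L" using mem_affine[OF aff X B, of "1/u" "1 - 1/u"] by simp
  have A: "A \<in> ?L" "C \<in> ?L" by (simp_all add: hull_inc)
  have "{A, B, C, D} \<subseteq> ?L" using A B D by auto
  moreover have "collinear ?L" by (simp add: collinear_affine_hull_collinear)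
  ultimately show False using nc collinear_subset by blast
qed

lemma cq_rot: "convex_quad A B C D \<Longrightarrow> convex_quad B C D A"
  unfolding convex_quad_def by (auto simp: open_segment_commute insert_commute)

lemma cq_rev: "convex_quad A B C D \<Longrightarrow> convex_quad A D C B"
  unfolding convex_quad_def by (auto simp: open_segment_commute insert_commute)

lemma cq_distinct:
  assumes "convex_quad A B C D" shows "A \<noteq> B"
  using cq_noncol[OF assms] by auto

lemma dep_helper:
  fixes u v X :: point
  assumes u3: "u$3 = X$1 * u$1 + X$2 * u$2" and v3: "v$3 = X$1 * v$1 + X$2 * v$2"
    and d': "u$1 * v$2 = u$2 * v$1"
  shows "u = 0 \<or> v = 0 \<or> (\<exists>c. v = c *\<^sub>R u)"
proof (cases "u$1 = 0")
  case True
  show ?thesis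
  proof (cases "u$2 = 0")
    case True2: True
    then have "u = 0" using True u3 by (simp add: vec_eq_iff forall_3)
    then show ?thesis by simp
  next
    case False
    define c where "c = v$2 / u$2"
    have v1: "v$1 = 0" using d' True False by simp
    have c2: "v$2 = c * u$2" using False by (simp add: c_def)
    have "v$3 = c * u$3" using v3 u3 v1 True c2 by (simp add: algebra_simps)
    then have "v = c *\<^sub>R u"
      using True v1 c2 by (simp add: vec_eq_iff forall_3)
    then show ?thesis by blast
  qed
next
  case False
  define c where "c = v$1 / u$1"
  have c1: "v$1 = c * u$1" using False by (simp add: c_def)
  have "v$2 * u$1 = c * u$2 * u$1" using d' c1 by (simp add: algebra_simps)
  then have c2: "v$2 = c * u$2" using False by simp
  have "v$3 = c * u$3" using v3 u3 c1 c2 by (simp add: algebra_simps)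
  then have "v = c *\<^sub>R u"
    using c1 c2 by (simp add: vec_eq_iff forall_3)
  then show ?thesis by blast
qed

lemma noncol_top:
  assumes "A \<in> gr X" "B \<in> gr X" "C \<in> gr X" "\<not> collinear {A, B, C}"
  shows "det2top (B - A) (C - A) \<noteq> 0"
proof
  assume d: "det2top (B - A) (C - A) = 0"
  let ?u = "B - A" and ?v = "C - A"
  have u3: "?u$3 = X$1 * ?u$1 + X$2 * ?u$2" using assms(1,2) by (simp add: gr_def algebra_simps)
  have v3: "?v$3 = X$1 * ?v$1 + X$2 * ?v$2" using assms(1,3) by (simp add: gr_def algebra_simps)
  have d': "?u$1 * ?v$2 = ?u$2 * ?v$1" using d by (simp add: det2top_def)
  have "?u = 0 \<or> ?v = 0 \<or> (\<exists>c. ?v = c *\<^sub>R ?u)"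
    by (rule dep_helper[OF u3 v3 d'])
  then have "collinear {0, ?u, ?v}" by (simp add: collinear_lemma)
  then have "collinear {B, A, C}" by (subst collinear_3) auto
  then show False using assms(4) by (simp add: insert_commute)
qed

lemma gr_hyperplane: "gr X = {x. vector [X$1, X$2, -1] \<bullet> x = X$3}"
  by (auto simp: gr_def inner_vec_def sum_3 algebra_simps)

lemma gr_affine: "affine (gr X)"
  by (simp add: gr_hyperplane affine_hyperplane)

lemma gr_aff_dim: "aff_dim (gr X) = 2"
proof -
  have "vector [X$1, X$2, -1] \<noteq> (0::point)"
    by (metis vector_3(3) zero_index neg_equal_0_iff_equal zero_neq_one)
  then show ?thesis by (simp add: gr_hyperplane)
qed

lemma cq_affine_hull:
  assumes "convex_quad A B C D" "A \<in> gr X" "B \<in> gr X" "C \<in> gr X" "D \<in> gr X"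
  shows "affine hull {A, B, C, D} = gr X"
proof -
  have sub: "affine hull {A, B, C, D} \<subseteq> gr X"
    using assms by (intro hull_minimal) (auto simp: gr_affine)
  have "\<not> collinear {A, B, C}" using cq_noncol[OF assms(1)] .
  then have "aff_dim {A, B, C} > 1" by (simp add: collinear_aff_dim)
  moreover have "aff_dim {A, B, C} \<le> aff_dim {A, B, C, D}"
    by (intro aff_dim_subset) auto
  moreover have "aff_dim {A, B, C, D} \<le> aff_dim (gr X)"
    using aff_dim_subset[OF sub] by simp
  ultimately have "aff_dim (affine hull {A, B, C, D}) = aff_dim (gr X)"
    using gr_aff_dim by simp
  then show ?thesis
    by (intro affine_dim_equal) (auto simp: gr_affine sub)
qed

lemma gr_eq_imp: "gr X = gr Y \<Longrightarrow> X = Y"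
proof -
  assume e: "gr X = gr Y"
  have p: "\<And>x::point. x$3 = X$1*x$1 + X$2*x$2 - X$3 \<longleftrightarrow> x$3 = Y$1*x$1 + Y$2*x$2 - Y$3"
    using e unfolding gr_def set_eq_iff mem_Collect_eq by blast
  have 3: "X$3 = Y$3" using p[of "vector [0, 0, - X$3]"] by simp
  have 1: "X$1 = Y$1" using p[of "vector [1, 0, X$1 - X$3]"] 3 by simp
  have 2: "X$2 = Y$2" using p[of "vector [0, 1, X$2 - X$3]"] 3 by simp
  show "X = Y" using 1 2 3 by (simp add: vec_eq_iff forall_3)
qed

lemma plane_dual_gr: "plane_dual (gr X) = X"
  unfolding plane_dual_def
proof (rule the_equality)
  show "gr X = {x. x $ 3 = X $ 1 * x $ 1 + X $ 2 * x $ 2 - X $ 3}" by (simp add: gr_def)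
next
  fix P :: point assume "gr X = {x. x $ 3 = P $ 1 * x $ 1 + P $ 2 * x $ 2 - P $ 3}"
  then have "gr X = gr P" by (simp add: gr_def)
  then show "P = X" using gr_eq_imp by metis
qed


definition sh :: "point \<Rightarrow> point \<Rightarrow> point" where "sh w x = x + hh x w *\<^sub>R e3"

lemma sh_comps[simp]: "sh w x $ 1 = x$1" "sh w x $ 2 = x$2" "sh w x $ 3 = x$3 + hh x w"
  by (simp_all add: sh_def)

lemma sh_inv[simp]: "sh (- w) (sh w x) = x"
  by (simp add: vec_eq_iff forall_3 hh_def)

lemma sh_inj: "sh w x = sh w y \<Longrightarrow> x = y"
  by (metis sh_inv)

lemma sh_comb: "sh w ((1 - u) *\<^sub>R A + u *\<^sub>R C) = (1 - u) *\<^sub>R sh w A + u *\<^sub>R sh w C"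
  by (simp add: vec_eq_iff forall_3 hh_def algebra_simps)

lemma sh_open_segment: "X \<in> open_segment A C \<Longrightarrow> sh w X \<in> open_segment (sh w A) (sh w C)"
  unfolding in_segment by (metis sh_comb sh_inj)

lemma collinear_sh: "collinear S \<Longrightarrow> collinear (sh w ` S)"
proof -
  assume "collinear S"
  then obtain u where u: "\<forall>x\<in>S. \<forall>y\<in>S. \<exists>c. x - y = c *\<^sub>R u" unfolding collinear_def by blast
  have "\<forall>x\<in>sh w ` S. \<forall>y\<in>sh w ` S. \<exists>c. x - y = c *\<^sub>R (u + (u$1*w$1 + u$2*w$2) *\<^sub>R e3)"
  proof (intro ballI)
    fix x y assume "x \<in> sh w ` S" "y \<in> sh w ` S"
    then obtain x' y' where xy: "x' \<in> S" "y' \<in> S" "x = sh w x'" "y = sh w y'" by blast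
    then obtain c where c: "x' - y' = c *\<^sub>R u" using u by blast
    have c': "x'$k - y'$k = c * u$k" for k
    proof -
      have "(x' - y')$k = (c *\<^sub>R u)$k" using c by simp
      then show ?thesis by simp
    qed
    have "x - y = c *\<^sub>R (u + (u$1*w$1 + u$2*w$2) *\<^sub>R e3)"
      using c'[of 1] c'[of 2] c'[of 3] unfolding xy
      by (simp add: vec_eq_iff forall_3 hh_def algebra_simps)
    then show "\<exists>c. x - y = c *\<^sub>R (u + (u$1*w$1 + u$2*w$2) *\<^sub>R e3)" by blast
  qed
  then show ?thesis unfolding collinear_def by blast
qed

lemma cq_sh:
  assumes "convex_quad A B C D"
  shows "convex_quad (sh w A) (sh w B) (sh w C) (sh w D)"
proof -
  from assms obtain X where X: "X \<in> open_segment A C" "X \<in> open_segment B D"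
    and nc: "\<not> collinear {A, B, C, D}" unfolding convex_quad_def by blast
  have "sh w X \<in> open_segment (sh w A) (sh w C) \<inter> open_segment (sh w B) (sh w D)"
    using X sh_open_segment by blast
  moreover have "\<not> collinear {sh w A, sh w B, sh w C, sh w D}"
  proof
    assume "collinear {sh w A, sh w B, sh w C, sh w D}"
    then have "collinear (sh (-w) ` {sh w A, sh w B, sh w C, sh w D})" by (rule collinear_sh)
    then show False using nc by simp
  qed
  ultimately show ?thesis unfolding convex_quad_def by blast
qed

lemma iso_sh: "iso_congruence (sh w)"
  unfolding iso_congruence_def
proof (intro exI)
  show "sh w = (\<lambda>x. (vector [vector [cos 0, - sin 0, 0], vector [sin 0, cos 0, 0],
        vector [w$1, w$2, 1]] :: real^3^3) *v x + vector [0, 0, - w$3])"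
    by (rule ext) (simp add: vec_eq_iff forall_3 matrix_vector_mult_def sum_3 hh_def algebra_simps)
qed


locale Trep =
  fixes F :: "nat \<Rightarrow> nat \<Rightarrow> point" and m n :: nat and a b :: "nat \<Rightarrow> point" and \<sigma> :: "nat \<Rightarrow> real"
  assumes sig: "\<And>k. k \<le> Suc m \<Longrightarrow> \<sigma> k > 0"
  and dt: "\<And>i j. i \<le> m \<Longrightarrow> j \<le> n \<Longrightarrow> det3 e3 (b (Suc j) - b j) (Tdelta a b \<sigma> i j) \<noteq> 0"
  and rep: "\<And>i j. i \<le> m \<Longrightarrow> j \<le> n \<Longrightarrow> F i j = Tpoint a b \<sigma> (a i + \<sigma> i *\<^sub>R b j) i j"
  and mn: "2 \<le> m" "2 \<le> n"
  and net: "is_net F m n"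
begin

definition "db j = b (Suc j) - b j"
definition "Dl i j = Tdelta a b \<sigma> i j"
definition "st t k = sqrt (t + (\<sigma> k)^2)"
definition "cc t k = (\<sigma> k + \<sigma> (k-1)) / (st t k + st t (k-1))"
definition "P t i j = Tpath a b \<sigma> t i j"
definition "Q i j = a i + \<sigma> i *\<^sub>R b j"
definition "Ft t i j = Tpoint a b \<sigma> (P t i j) i j"

lemma st_pos: "t \<ge> 0 \<Longrightarrow> k \<le> Suc m \<Longrightarrow> st t k > 0"
  using sig[of k] by (simp add: st_def add_nonneg_pos)

lemma st_sq: "t \<ge> 0 \<Longrightarrow> (st t k)^2 = t + (\<sigma> k)^2"
  by (simp add: st_def add_nonneg_nonneg)

lemma st0: "k \<le> Suc m \<Longrightarrow> st 0 k = \<sigma> k"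
  using sig[of k] by (simp add: st_def)

lemma P_expand: "P t i j = a 0 + (\<Sum>k\<in>{1..i}. cc t k *\<^sub>R (a k - a (k-1))) + st t i *\<^sub>R b j"
  by (simp add: P_def Tpath_def cc_def st_def)

lemma st_step:
  assumes "t \<ge> 0" "i \<le> m"
  shows "st t (Suc i) - st t i = cc t (Suc i) * (\<sigma> (Suc i) - \<sigma> i)"
proof -
  have p1: "st t (Suc i) > 0" and p0: "st t i > 0" using st_pos assms by auto
  have "(st t (Suc i) - st t i) * (st t (Suc i) + st t i) = (st t (Suc i))^2 - (st t i)^2"
    by (simp add: power2_eq_square algebra_simps)
  also have "\<dots> = (\<sigma> (Suc i) + \<sigma> i) * (\<sigma> (Suc i) - \<sigma> i)"
    using st_sq assms by (simp add: power2_eq_square algebra_simps)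
  finally have "st t (Suc i) - st t i = (\<sigma> (Suc i) + \<sigma> i) * (\<sigma> (Suc i) - \<sigma> i) / (st t (Suc i) + st t i)"
    using p0 p1 by (simp add: field_simps)
  then show ?thesis by (simp add: cc_def)
qed

lemma P_step_i:
  assumes "t \<ge> 0" "i \<le> m"
  shows "P t (Suc i) j - P t i j = cc t (Suc i) *\<^sub>R Dl i j"
proof -
  have "P t (Suc i) j - P t i j = cc t (Suc i) *\<^sub>R (a (Suc i) - a i) + (st t (Suc i) - st t i) *\<^sub>R b j"
    unfolding P_expand by (simp add: algebra_simps)
  also have "\<dots> = cc t (Suc i) *\<^sub>R (a (Suc i) - a i) + (cc t (Suc i) * (\<sigma> (Suc i) - \<sigma> i)) *\<^sub>R b j"
    using st_step[OF assms] by simp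
  also have "\<dots> = cc t (Suc i) *\<^sub>R Dl i j"
    by (simp add: Dl_def Tdelta_def scaleR_add_right)
  finally show ?thesis .
qed

lemma P_step_j: "P t i (Suc j) - P t i j = st t i *\<^sub>R db j"
  unfolding P_expand by (simp add: db_def algebra_simps)

lemma cc0: assumes "k \<le> Suc m" "0 < k" shows "cc 0 k = 1"
proof -
  have "\<sigma> k > 0" "\<sigma> (k-1) > 0" using sig assms by auto
  then show ?thesis using assms by (simp add: cc_def st0)
qed

lemma P0: "i \<le> Suc m \<Longrightarrow> P 0 i j = Q i j"
proof (induction i)
  case 0
  then show ?case using st0[of 0] by (simp add: P_expand Q_def)
next
  case (Suc i)
  have "P 0 (Suc i) j = P 0 i j + cc 0 (Suc i) *\<^sub>R Dl i j"
    using P_step_i[of 0 i j] Suc.prems by (simp add: algebra_simps)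
  also have "\<dots> = Q (Suc i) j"
    using Suc cc0[of "Suc i"] by (simp add: Q_def Dl_def Tdelta_def algebra_simps)
  finally show ?case .
qed


lemma Ft_TP: "Ft t i j = TP (P t i j) (db j) (Dl i j)"
  by (simp add: Ft_def Tpoint_TP db_def Dl_def)

lemma F_TP: "i \<le> m \<Longrightarrow> j \<le> n \<Longrightarrow> F i j = TP (Q i j) (db j) (Dl i j)"
  by (simp add: rep Tpoint_TP db_def Dl_def Q_def)

lemma dt': "i \<le> m \<Longrightarrow> j \<le> n \<Longrightarrow> det3 e3 (db j) (Dl i j) \<noteq> 0"
  using dt by (simp add: db_def Dl_def)

lemma Ft0: "i \<le> m \<Longrightarrow> j \<le> n \<Longrightarrow> Ft 0 i j = F i j"
  by (simp add: Ft_TP F_TP P0)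

lemma face_comb:
  assumes "i < m" "j < n" "t \<ge> 0" "k \<in> {i, Suc i}" "l \<in> {j, Suc j}"
  shows "\<exists>\<alpha> \<beta>. P t (Suc i) (Suc j) = P t k l + \<alpha> *\<^sub>R db l + \<beta> *\<^sub>R Dl k l"
proof -
  have si: "P t (Suc i) j' = P t i j' + cc t (Suc i) *\<^sub>R Dl i j'" for j'
    using P_step_i[of t i j'] assms by (simp add: algebra_simps)
  have sj: "P t i' (Suc j) = P t i' j + st t i' *\<^sub>R db j" for i'
    using P_step_j[of t i' j] by (simp add: algebra_simps)
  consider "k = i" "l = j" | "k = i" "l = Suc j" | "k = Suc i" "l = j" | "k = Suc i" "l = Suc j"
    using assms by auto
  then show ?thesis
  proof cases
    case 1
    then show ?thesis using si[of "Suc j"] si[of j] sj[of "Suc i"]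
      by (intro exI[of _ "st t (Suc i)"] exI[of _ "cc t (Suc i)"]) (simp add: algebra_simps)
  next
    case 2
    then show ?thesis using si[of "Suc j"]
      by (intro exI[of _ 0] exI[of _ "cc t (Suc i)"]) simp
  next
    case 3
    then show ?thesis using sj[of "Suc i"]
      by (intro exI[of _ "st t (Suc i)"] exI[of _ 0]) simp
  next
    case 4
    then show ?thesis by (intro exI[of _ 0] exI[of _ 0]) simp
  qed
qed

lemma Ft_in_gr:
  assumes "i < m" "j < n" "t \<ge> 0" "k \<in> {i, Suc i}" "l \<in> {j, Suc j}"
  shows "Ft t k l \<in> gr (P t (Suc i) (Suc j))"
proof -
  obtain \<alpha> \<beta> where e: "P t (Suc i) (Suc j) = P t k l + \<alpha> *\<^sub>R db l + \<beta> *\<^sub>R Dl k l"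
    using face_comb[OF assms] by blast
  have "k \<le> m" "l \<le> n" using assms by auto
  then show ?thesis unfolding in_gr e Ft_TP using TP_hh_comb dt' by blast
qed

lemma Ft_sh:
  assumes "i < m" "j < n" "t \<ge> 0" "k \<in> {i, Suc i}" "l \<in> {j, Suc j}"
  shows "Ft t k l = sh (P t (Suc i) (Suc j) - P 0 (Suc i) (Suc j)) (F k l)"
proof -
  obtain \<alpha> \<beta> where e: "P t (Suc i) (Suc j) = P t k l + \<alpha> *\<^sub>R db l + \<beta> *\<^sub>R Dl k l"
    using face_comb[OF assms] by blast
  obtain \<alpha>' \<beta>' where e': "P 0 (Suc i) (Suc j) = P 0 k l + \<alpha>' *\<^sub>R db l + \<beta>' *\<^sub>R Dl k l"
    using face_comb[OF assms(1,2) _ assms(4,5)] by blast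
  have km: "k \<le> m" "l \<le> n" using assms by auto
  note d = dt'[OF km]
  have F: "F k l = TP (P 0 k l) (db l) (Dl k l)" using F_TP[OF km] P0 km by simp
  have h1: "hh (F k l) (db l) = 0" "hh (F k l) (Dl k l) = 0" using TP_hh[OF d] F by auto
  have "Ft t k l = F k l + hh (F k l) (P t k l - P 0 k l) *\<^sub>R e3"
    unfolding Ft_TP F by (rule TP_shift[OF d])
  moreover have "hh (F k l) (P t k l - P 0 k l) = hh (F k l) (P t (Suc i) (Suc j) - P 0 (Suc i) (Suc j))"
    unfolding e e' by (simp add: hh_add hh_diff hh_scale h1)
  ultimately show ?thesis by (simp add: sh_def)
qed

lemma Ft_cq:
  assumes "i < m" "j < n" "t \<ge> 0"
  shows "convex_quad (Ft t i j) (Ft t (Suc i) j) (Ft t (Suc i) (Suc j)) (Ft t i (Suc j))"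
proof -
  have "convex_quad (F i j) (F (Suc i) j) (F (Suc i) (Suc j)) (F i (Suc j))"
    using net assms unfolding is_net_def by blast
  then show ?thesis using Ft_sh[OF assms] cq_sh by simp
qed

lemma Ft_net: "t \<ge> 0 \<Longrightarrow> is_net (Ft t) m n"
  unfolding is_net_def using Ft_cq by blast

lemma Ft_face_plane:
  assumes "i < m" "j < n" "t \<ge> 0"
  shows "face_plane (Ft t) i j = gr (P t (Suc i) (Suc j))"
  unfolding face_plane_def using Ft_cq[OF assms] Ft_in_gr[OF assms]
  by (intro cq_affine_hull) auto

lemma Ft_face_dual:
  assumes "i < m" "j < n" "t \<ge> 0"
  shows "face_dual (Ft t) i j = P t (Suc i) (Suc j)"
  unfolding face_dual_def Ft_face_plane[OF assms] plane_dual_gr ..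

lemma F_face_plane:
  assumes "i < m" "j < n"
  shows "face_plane F i j = face_plane (Ft 0) i j"
  using assms by (simp add: face_plane_def Ft0)

lemma cc_st: "t \<ge> 0 \<Longrightarrow> i \<le> m \<Longrightarrow> cc t (Suc i) * (st t i + st t (Suc i)) = \<sigma> i + \<sigma> (Suc i)"
  using st_pos[of t i] st_pos[of t "Suc i"] by (simp add: cc_def field_simps)

lemma curv_Ft:
  assumes "0 < i" "i < m" "0 < j" "j < n" "t \<ge> 0"
  shows "curvature (Ft t) i j = (\<sigma> i + \<sigma> (Suc i)) / 2 * det2top (Dl i j) (db j)"
proof -
  have d1: "face_dual (Ft t) (i-1) (j-1) = P t i j" using Ft_face_dual[of "i-1" "j-1" t] assms by simp
  have d2: "face_dual (Ft t) i (j-1) = P t (Suc i) j" using Ft_face_dual[of i "j-1" t] assms by simp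
  have d3: "face_dual (Ft t) i j = P t (Suc i) (Suc j)" using Ft_face_dual[of i j t] assms by simp
  have d4: "face_dual (Ft t) (i-1) j = P t i (Suc j)" using Ft_face_dual[of "i-1" j t] assms by simp
  have e2: "P t (Suc i) j = P t i j + cc t (Suc i) *\<^sub>R Dl i j"
    using P_step_i[of t i j] assms by (simp add: algebra_simps)
  have e3: "P t (Suc i) (Suc j) = P t i j + cc t (Suc i) *\<^sub>R Dl i j + st t (Suc i) *\<^sub>R db j"
    using P_step_j[of t "Suc i" j] e2 by (simp add: algebra_simps)
  have e4: "P t i (Suc j) = P t i j + st t i *\<^sub>R db j"
    using P_step_j[of t i j] by (simp add: algebra_simps)
  have "curvature (Ft t) i j = cc t (Suc i) * (st t i + st t (Suc i)) * det2top (Dl i j) (db j) / 2"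
    unfolding curvature_def Let_def d1 d2 d3 d4 e2 e3 e4 det2top_shoelace ..
  then show ?thesis using cc_st[of t i] assms by simp
qed

lemma curv_F:
  assumes "0 < i" "i < m" "0 < j" "j < n"
  shows "curvature F i j = curvature (Ft 0) i j"
proof -
  have "face_dual F i' j' = face_dual (Ft 0) i' j'" if "i' < m" "j' < n" for i' j'
    using F_face_plane[OF that] by (simp add: face_dual_def)
  then show ?thesis using assms by (simp add: curvature_def Let_def)
qed


lemma P_cont:
  assumes "i \<le> m"
  shows "continuous_on {0..1} (\<lambda>t. P t i j)"
proof -
  have den: "st t k + st t (k-1) \<noteq> 0" if "t \<in> {0..1}" "k \<in> {1..i}" for t k
    using st_pos[of t k] st_pos[of t "k-1"] that assms by force
  have "continuous_on {0..1} (\<lambda>t. a 0 + (\<Sum>k\<in>{1..i}. ((\<sigma> k + \<sigma> (k-1)) / (sqrt (t + (\<sigma> k)^2) + sqrt (t + (\<sigma> (k-1))^2))) *\<^sub>R (a k - a (k-1))) + sqrt (t + (\<sigma> i)^2) *\<^sub>R b j)"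
    using den unfolding st_def
    by (intro continuous_intros) auto
  then show ?thesis unfolding P_expand cc_def st_def .
qed

lemma Ft_cont:
  assumes "i \<le> m" "j \<le> n"
  shows "continuous_on {0..1} (\<lambda>t. Ft t i j)"
proof -
  have F: "F i j = TP (P 0 i j) (db j) (Dl i j)" using F_TP[OF assms] P0 assms by simp
  have e: "Ft t i j = F i j + hh (F i j) (P t i j - P 0 i j) *\<^sub>R e3" for t
    unfolding Ft_TP F by (rule TP_shift[OF dt'[OF assms]])
  show ?thesis unfolding e hh_def using P_cont[OF assms(1)]
    by (intro continuous_intros) auto
qed

lemma Ft_cong:
  assumes "i < m" "j < n" "t \<ge> 0"
  shows "\<exists>C. iso_congruence C \<and> C (F i j) = Ft t i j \<and> C (F (Suc i) j) = Ft t (Suc i) j \<and>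
            C (F (Suc i) (Suc j)) = Ft t (Suc i) (Suc j) \<and> C (F i (Suc j)) = Ft t i (Suc j)"
  using Ft_sh[OF assms] iso_sh by (intro exI[of _ "sh (P t (Suc i) (Suc j) - P 0 (Suc i) (Suc j))"]) auto

lemma curv_eq:
  assumes "0 < i" "i < m" "0 < j" "j < n" "t \<ge> 0"
  shows "curvature (Ft t) i j = curvature F i j"
proof -
  have "curvature (Ft t) i j = curvature (Ft 0) i j"
    using curv_Ft[OF assms] curv_Ft[OF assms(1-4), of 0] by simp
  then show ?thesis using curv_F[OF assms(1-4)] by simp
qed

lemma deformation: "iso_isometric_deformation F m n 1 Ft"
proof -
  have c1: "\<forall>i\<le>m. \<forall>j\<le>n. continuous_on {0..1} (\<lambda>t. Ft t i j) \<and> Ft 0 i j = F i j"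
    using Ft_cont Ft0 by auto
  have c2: "\<forall>t\<in>{0..1}. is_net (Ft t) m n \<and>
        (\<forall>i<m. \<forall>j<n. \<exists>C. iso_congruence C \<and>
            C (F i j) = Ft t i j \<and> C (F (Suc i) j) = Ft t (Suc i) j \<and>
            C (F (Suc i) (Suc j)) = Ft t (Suc i) (Suc j) \<and> C (F i (Suc j)) = Ft t i (Suc j)) \<and>
        (\<forall>i j. 0 < i \<and> i < m \<and> 0 < j \<and> j < n \<longrightarrow> curvature (Ft t) i j = curvature F i j)"
  proof
    fix t :: real assume t: "t \<in> {0..1}"
    then have t0: "t \<ge> 0" by simp
    show "is_net (Ft t) m n \<and>
        (\<forall>i<m. \<forall>j<n. \<exists>C. iso_congruence C \<and>
            C (F i j) = Ft t i j \<and> C (F (Suc i) j) = Ft t (Suc i) j \<and>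
            C (F (Suc i) (Suc j)) = Ft t (Suc i) (Suc j) \<and> C (F i (Suc j)) = Ft t i (Suc j)) \<and>
        (\<forall>i j. 0 < i \<and> i < m \<and> 0 < j \<and> j < n \<longrightarrow> curvature (Ft t) i j = curvature F i j)"
      using Ft_net[OF t0] Ft_cong[OF _ _ t0] curv_eq[OF _ _ _ _ t0] by auto
  qed
  show ?thesis unfolding iso_isometric_deformation_def using c1 c2 by simp
qed


lemma rot_id:
  fixes c s w1 w2 :: real
  assumes "c * w1 - s * w2 = w1" "s * w1 + c * w2 = w2" "w1 \<noteq> 0 \<or> w2 \<noteq> 0" "s^2 + c^2 = 1"
  shows "c = 1 \<and> s = 0"
proof -
  have "(c - 1) * (w1^2 + w2^2) = w1 * (c * w1 - s * w2 - w1) + w2 * (s * w1 + c * w2 - w2)"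
    by (simp add: power2_eq_square algebra_simps)
  also have "\<dots> = 0" using assms(1,2) by simp
  finally have "(c - 1) * (w1^2 + w2^2) = 0" .
  moreover have "w1^2 + w2^2 > 0" using assms(3) by (auto simp: add_pos_nonneg add_nonneg_pos)
  ultimately have "c - 1 = 0" by (metis mult_eq_0_iff less_irrefl)
  then have c: "c = 1" by simp
  then have "s^2 = 0" using assms(4) by simp
  then show ?thesis using c by simp
qed

lemma db_nz: "j \<le> n \<Longrightarrow> db j \<noteq> 0"
  using dt'[of 0 j] by (auto simp: det3_expand)

lemma nontrivial: "nontrivial_deformation F m n 1 Ft"
  unfolding nontrivial_deformation_def
proof
  assume "\<forall>t\<in>{0..1}. \<exists>C. iso_congruence C \<and> (\<forall>i\<le>m. \<forall>j\<le>n. Ft t i j = C (F i j))"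
  then obtain C where iC: "iso_congruence C" and HC: "\<And>i j. i \<le> m \<Longrightarrow> j \<le> n \<Longrightarrow> Ft 1 i j = C (F i j)"
    by force
  from iC obtain \<phi> c1 c2 bb where Cdef: "C = (\<lambda>x. (vector [vector [cos \<phi>, - sin \<phi>, 0],
                        vector [sin \<phi>, cos \<phi>, 0],
                        vector [c1, c2, 1]] :: real^3^3) *v x + bb)"
    unfolding iso_congruence_def by blast
  have Cc: "C x $ 1 = cos \<phi> * x$1 - sin \<phi> * x$2 + bb$1"
           "C x $ 2 = sin \<phi> * x$1 + cos \<phi> * x$2 + bb$2"
           "C x $ 3 = c1 * x$1 + c2 * x$2 + x$3 + bb$3" for x
    unfolding Cdef by (simp_all add: matrix_vector_mult_def sum_3)
  define w where "w i j = P 1 (Suc i) (Suc j) - P 0 (Suc i) (Suc j)" for i j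
  have shv: "Ft 1 k l = sh (w i j) (F k l)" if "i < m" "j < n" "k \<in> {i, Suc i}" "l \<in> {j, Suc j}" for i j k l
    using Ft_sh[OF that(1,2) _ that(3,4), of 1] by (simp add: w_def)
  have eqv: "sh (w i j) (F k l) = C (F k l)" if "i < m" "j < n" "k \<in> {i, Suc i}" "l \<in> {j, Suc j}" for i j k l
    using shv[OF that] HC[of k l] that by auto
  have m1: "0 < m" "1 < n" using mn by auto
  have top1: "cos \<phi> * F k l $1 - sin \<phi> * F k l $2 + bb$1 = F k l $ 1"
   and top2: "sin \<phi> * F k l $1 + cos \<phi> * F k l $2 + bb$2 = F k l $ 2"
   and thr: "hh (F k l) (w i j) = c1 * F k l $1 + c2 * F k l $2 + bb$3"
    if "i < m" "j < n" "k \<in> {i, Suc i}" "l \<in> {j, Suc j}" for i j k l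
  proof -
    have e: "sh (w i j) (F k l) $ r = C (F k l) $ r" for r using eqv[OF that] by simp
    show "cos \<phi> * F k l $1 - sin \<phi> * F k l $2 + bb$1 = F k l $ 1" using e[of 1] Cc by simp
    show "sin \<phi> * F k l $1 + cos \<phi> * F k l $2 + bb$2 = F k l $ 2" using e[of 2] Cc by simp
    show "hh (F k l) (w i j) = c1 * F k l $1 + c2 * F k l $2 + bb$3" using e[of 3] Cc by simp
  qed
  have cq00: "convex_quad (F 0 0) (F 1 0) (F 1 1) (F 0 1)" using net m1 unfolding is_net_def by force
  have cq01: "convex_quad (F 0 1) (F 1 1) (F 1 2) (F 0 2)" using net m1 unfolding is_net_def
    by (metis One_nat_def Suc_1)
  have ing: "F k l \<in> gr (P 0 (Suc i) (Suc j))" if "i < m" "j < n" "k \<in> {i, Suc i}" "l \<in> {j, Suc j}" for i j k l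
    using Ft_in_gr[OF that(1,2) _ that(3,4), of 0] Ft0[of k l] that by auto
  have nt00: "det2top (F 1 0 - F 0 0) (F 1 1 - F 0 0) \<noteq> 0"
    using noncol_top[OF ing[of 0 0 0 0] ing[of 0 0 1 0] ing[of 0 0 1 1] cq_noncol[OF cq00]] m1 by auto
  have nt01: "det2top (F 1 1 - F 0 1) (F 1 2 - F 0 1) \<noteq> 0"
    using noncol_top[OF ing[of 0 1 0 1] ing[of 0 1 1 1] ing[of 0 1 1 2] cq_noncol[OF cq01]] m1
    by (auto simp: numeral_2_eq_2)
  have wnz: "(F 1 0 - F 0 0)$1 \<noteq> 0 \<or> (F 1 0 - F 0 0)$2 \<noteq> 0"
    using nt00 by (auto simp: det2top_def)
  have "cos \<phi> = 1 \<and> sin \<phi> = 0"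
  proof (rule rot_id[OF _ _ wnz])
    show "cos \<phi> * (F 1 0 - F 0 0) $ 1 - sin \<phi> * (F 1 0 - F 0 0) $ 2 = (F 1 0 - F 0 0) $ 1"
      using top1[of 0 0 0 0] top1[of 0 0 1 0] m1 by (simp add: algebra_simps)
    show "sin \<phi> * (F 1 0 - F 0 0) $ 1 + cos \<phi> * (F 1 0 - F 0 0) $ 2 = (F 1 0 - F 0 0) $ 2"
      using top2[of 0 0 0 0] top2[of 0 0 1 0] m1 by (simp add: algebra_simps)
    show "(sin \<phi>)\<^sup>2 + (cos \<phi>)\<^sup>2 = 1" by simp
  qed
  define cv :: point where "cv = vector [c1, c2, - bb$3]"
  have hcv: "hh x cv = c1 * x$1 + c2 * x$2 + bb$3" for x by (simp add: cv_def hh_def)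
  have w00: "w 0 0 = cv"
  proof (rule hh_three_zero[OF _ _ _ nt00, THEN eq_iff_diff_eq_0[THEN iffD2]])
    show "hh (F 0 0) (w 0 0 - cv) = 0" "hh (F 1 0) (w 0 0 - cv) = 0" "hh (F 1 1) (w 0 0 - cv) = 0"
      using thr[of 0 0 0 0] thr[of 0 0 1 0] thr[of 0 0 1 1] m1 by (auto simp: hh_diff hcv)
  qed
  have w01: "w 0 1 = cv"
  proof (rule hh_three_zero[OF _ _ _ nt01, THEN eq_iff_diff_eq_0[THEN iffD2]])
    show "hh (F 0 1) (w 0 1 - cv) = 0" "hh (F 1 1) (w 0 1 - cv) = 0" "hh (F 1 2) (w 0 1 - cv) = 0"
      using thr[of 0 1 0 1] thr[of 0 1 1 1] thr[of 0 1 1 2] m1 by (auto simp: hh_diff hcv numeral_2_eq_2)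
  qed
  have "w 0 1 - w 0 0 = (st 1 1 - st 0 1) *\<^sub>R db 1"
    unfolding w_def using P_step_j[of 1 1 1] P_step_j[of 0 1 1]
    by (simp add: algebra_simps numeral_2_eq_2)
  moreover have "st 1 1 - st 0 1 \<noteq> 0"
  proof -
    have s: "\<sigma> 1 > 0" using sig[of 1] by simp
    have "st 0 1 = \<sigma> 1" using st0[of 1] by simp
    moreover have "st 1 1 > \<sigma> 1" unfolding st_def using s
      by (metis abs_of_pos less_add_same_cancel2 real_sqrt_abs real_sqrt_less_iff zero_less_one)
    ultimately show ?thesis by simp
  qed
  moreover have "db 1 \<noteq> 0" using db_nz m1 by simp
  ultimately show False using w00 w01 by simp
qed

lemma T_rep: "T_representation F m n"
proof -
  have e: "Ft = (\<lambda>t i j. Tpoint a b \<sigma> (Tpath a b \<sigma> t i j) i j)" by (simp add: fun_eq_iff Ft_def P_def)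
  have 1: "\<forall>k\<le>Suc m. 0 < \<sigma> k" using sig by simp
  have 2: "\<forall>i\<le>m. \<forall>j\<le>n. det3 e3 (b (Suc j) - b j) (Tdelta a b \<sigma> i j) \<noteq> 0 \<and>
                         F i j = Tpoint a b \<sigma> (a i + \<sigma> i *\<^sub>R b j) i j" using dt rep by simp
  have 3: "iso_isometric_deformation F m n 1 (\<lambda>t i j. Tpoint a b \<sigma> (Tpath a b \<sigma> t i j) i j)"
    using deformation by (simp only: e)
  have 4: "nontrivial_deformation F m n 1 (\<lambda>t i j. Tpoint a b \<sigma> (Tpath a b \<sigma> t i j) i j)"
    using nontrivial by (simp only: e)
  show ?thesis unfolding T_representation_def
    using 1 2 3 4 zero_less_one by blast
qed

end

definition ps :: "point \<Rightarrow> point \<Rightarrow> real" where "ps D x = hh x D - x$3"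

lemma inner3: "(a::point) \<bullet> x = a$1*x$1 + a$2*x$2 + a$3*x$3"
  by (simp add: inner_vec_def sum_3)

lemma ps_gr: "x \<in> gr D \<Longrightarrow> ps D x = 0"
  by (simp add: ps_def in_gr)

lemma ps_diff: "ps D x - ps D' x = hh x (D - D')"
  by (simp add: ps_def hh_diff)

lemma aff_three_hyperplane:
  fixes A B C :: point
  assumes "\<not> collinear {A, B, C}"
  shows "\<exists>a c. a \<noteq> 0 \<and> affine hull {A, B, C} = {x. a \<bullet> x = c}"
proof -
  have "aff_dim {A, B, C} > 1" using assms by (simp add: collinear_aff_dim)
  moreover have "card {A, B, C} \<le> 3" by (simp add: card_insert_if)
  then have "aff_dim {A, B, C} \<le> 2"
    using aff_dim_le_card[of "{A, B, C}"] by simp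
  ultimately have "aff_dim {A, B, C} = 2" by linarith
  then show ?thesis using aff_dim_eq_hyperplane[of "{A, B, C}"] by simp
qed

lemma face_lemma:
  assumes cq: "convex_quad Q1 Q2 Q3 Q4" and nV: "V \<notin> affine hull {Q1, Q2, Q3, Q4}"
    and int: "V + s *\<^sub>R e3 \<in> interior (hedral_angle V Q1 Q2 Q3 Q4)"
  shows "\<exists>D. affine hull {V, Q1, Q2} = gr D \<and> s * ps D Q3 < 0 \<and> s * ps D Q4 < 0"
proof -
  have Q12: "Q1 \<noteq> Q2" using cq_distinct[OF cq] .
  have nc: "\<not> collinear {V, Q1, Q2}"
  proof
    assume "collinear {V, Q1, Q2}"
    then have "collinear {Q1, Q2, V}" by (simp add: insert_commute)
    then have "V \<in> affine hull {Q1, Q2}" using collinear_3_affine_hull[OF Q12] by blast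
    moreover have "affine hull {Q1, Q2} \<subseteq> affine hull {Q1, Q2, Q3, Q4}" by (intro hull_mono) auto
    ultimately show False using nV by blast
  qed
  obtain a0 c0 where a0: "a0 \<noteq> 0" and H0: "affine hull {V, Q1, Q2} = {x. a0 \<bullet> x = c0}"
    using aff_three_hyperplane[OF nc] by blast
  have inH0: "a0 \<bullet> V = c0" "a0 \<bullet> Q1 = c0" "a0 \<bullet> Q2 = c0"
    using H0 hull_inc[of _ "{V, Q1, Q2}"] by auto
  from cq obtain X where X1: "X \<in> open_segment Q1 Q3" and X2: "X \<in> open_segment Q2 Q4"
    and nc4: "\<not> collinear {Q1, Q2, Q3, Q4}" unfolding convex_quad_def by blast
  obtain \<alpha> where al: "0 < \<alpha>" "\<alpha> < 1" "X = (1 - \<alpha>) *\<^sub>R Q1 + \<alpha> *\<^sub>R Q3" using X1 by (auto simp: in_segment)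
  obtain \<beta> where be: "0 < \<beta>" "\<beta> < 1" "X = (1 - \<beta>) *\<^sub>R Q2 + \<beta> *\<^sub>R Q4" using X2 by (auto simp: in_segment)
  have rel0: "\<alpha> * (a0 \<bullet> Q3 - c0) = \<beta> * (a0 \<bullet> Q4 - c0)"
  proof -
    have "a0 \<bullet> X = (1 - \<alpha>) * (a0 \<bullet> Q1) + \<alpha> * (a0 \<bullet> Q3)" using al(3) by (simp add: inner_add_right)
    then have "a0 \<bullet> X - c0 = \<alpha> * (a0 \<bullet> Q3 - c0)" using inH0 by (simp add: algebra_simps)
    moreover have "a0 \<bullet> X = (1 - \<beta>) * (a0 \<bullet> Q2) + \<beta> * (a0 \<bullet> Q4)" using be(3) by (simp add: inner_add_right)
    then have "a0 \<bullet> X - c0 = \<beta> * (a0 \<bullet> Q4 - c0)" using inH0 by (simp add: algebra_simps)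
    ultimately show ?thesis by simp
  qed
  have nz: "a0 \<bullet> Q3 - c0 \<noteq> 0"
  proof
    assume z: "a0 \<bullet> Q3 - c0 = 0"
    then have z4: "a0 \<bullet> Q4 - c0 = 0" using rel0 be(1) al(1) by simp
    let ?H = "{x. a0 \<bullet> x = c0}"
    have sub: "affine hull {Q1, Q2, Q3, Q4} \<subseteq> ?H"
      using inH0 z z4 by (intro hull_minimal) (auto simp: affine_hyperplane)
    have "\<not> collinear {Q1, Q2, Q3}" using cq_noncol[OF cq] .
    then have "aff_dim {Q1, Q2, Q3} > 1" by (simp add: collinear_aff_dim)
    moreover have "aff_dim {Q1, Q2, Q3} \<le> aff_dim {Q1, Q2, Q3, Q4}" by (intro aff_dim_subset) auto
    moreover have "aff_dim {Q1, Q2, Q3, Q4} \<le> aff_dim ?H" using aff_dim_subset[OF sub] by simp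
    moreover have "aff_dim ?H = 2" using a0 by simp
    ultimately have "aff_dim (affine hull {Q1, Q2, Q3, Q4}) = aff_dim ?H" by simp
    then have "affine hull {Q1, Q2, Q3, Q4} = ?H"
      by (intro affine_dim_equal) (auto simp: affine_hyperplane sub)
    then show False using nV inH0 by auto
  qed
  define sg where "sg = (if a0 \<bullet> Q3 - c0 > 0 then 1 else -1 :: real)"
  define a where "a = sg *\<^sub>R a0"
  define c where "c = sg * c0"
  have sg: "sg \<noteq> 0" "sg * sg = 1" by (auto simp: sg_def)
  have a: "a \<noteq> 0" using a0 sg by (simp add: a_def)
  have H: "affine hull {V, Q1, Q2} = {x. a \<bullet> x = c}"
    unfolding H0 a_def c_def using sg by auto
  have inH: "a \<bullet> V = c" "a \<bullet> Q1 = c" "a \<bullet> Q2 = c" using inH0 by (auto simp: a_def c_def)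
  have p3: "a \<bullet> Q3 - c > 0" using nz by (auto simp: a_def c_def sg_def algebra_simps)
  have p4: "a \<bullet> Q4 - c > 0"
  proof -
    have aq: "a \<bullet> Q - c = sg * (a0 \<bullet> Q - c0)" for Q by (simp add: a_def c_def algebra_simps)
    have "\<beta> * (a \<bullet> Q4 - c) = \<alpha> * (a \<bullet> Q3 - c)" unfolding aq using rel0 by (simp only: mult.left_commute[of _ sg])
    moreover have "\<alpha> * (a \<bullet> Q3 - c) > 0" using al(1) p3 by simp
    ultimately have "\<beta> * (a \<bullet> Q4 - c) > 0" by simp
    then show ?thesis using be(1) zero_less_mult_pos by blast
  qed
  let ?HS = "{x. a \<bullet> x \<ge> c}"
  have chull: "convex hull {Q1, Q2, Q3, Q4} \<subseteq> ?HS"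
    using inH p3 p4 by (intro hull_minimal) (auto simp: convex_halfspace_ge)
  have cone: "hedral_angle V Q1 Q2 Q3 Q4 \<subseteq> ?HS"
  proof
    fix y assume "y \<in> hedral_angle V Q1 Q2 Q3 Q4"
    then obtain t q where y: "y = V + t *\<^sub>R (q - V)" "t \<ge> 0" "q \<in> convex hull {Q1, Q2, Q3, Q4}"
      unfolding hedral_angle_def by blast
    have "a \<bullet> q \<ge> c" using chull y(3) by auto
    then have "a \<bullet> y = c + t * (a \<bullet> q - c)" using y(1) inH by (simp add: inner_add_right inner_diff_right)
    then show "y \<in> ?HS" using y(2) \<open>a \<bullet> q \<ge> c\<close> by simp
  qed
  have "V + s *\<^sub>R e3 \<in> interior ?HS" using interior_mono[OF cone] int by blast
  then have "a \<bullet> (V + s *\<^sub>R e3) > c" using a by simp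
  moreover have "a \<bullet> (V + s *\<^sub>R e3) = a \<bullet> V + s * a$3" by (simp add: inner_add_right inner3 algebra_simps)
  ultimately have sa: "s * a$3 > 0" using inH by simp
  then have a3: "a$3 \<noteq> 0" by auto
  define D :: point where "D = vector [- a$1 / a$3, - a$2 / a$3, - c / a$3]"
  have psD: "ps D x = - (a \<bullet> x - c) / a$3" for x
  proof -
    have "ps D x = (- (a$1 * x$1) - a$2 * x$2 + c) / a$3 - x$3"
      by (simp add: ps_def hh_def D_def add_divide_distrib diff_divide_distrib mult.commute)
    also have "\<dots> = (- (a$1 * x$1) - a$2 * x$2 + c - a$3 * x$3) / a$3"
      using a3 by (simp add: diff_divide_distrib)
    also have "\<dots> = - (a \<bullet> x - c) / a$3" by (simp add: inner3 algebra_simps)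
    finally show ?thesis .
  qed
  have HD: "{x. a \<bullet> x = c} = gr D"
  proof -
    have "a \<bullet> x = c \<longleftrightarrow> x \<in> gr D" for x
    proof -
      have "x \<in> gr D \<longleftrightarrow> ps D x = 0" by (simp add: ps_def in_gr)
      also have "\<dots> \<longleftrightarrow> a \<bullet> x = c" using a3 psD by force
      finally show ?thesis by simp
    qed
    then show ?thesis by auto
  qed
  have sg34: "s * ps D Q3 < 0" "s * ps D Q4 < 0"
  proof -
    have eqQ: "s * ps D Q = - ((s * a$3) * (a \<bullet> Q - c)) / (a$3 * a$3)" for Q
      using a3 unfolding psD by (simp add: divide_simps algebra_simps)
    have a33: "a$3 * a$3 > 0" using a3 not_real_square_gt_zero by blast
    have "s * ps D Q < 0" if "a \<bullet> Q - c > 0" for Q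
    proof -
      have "((s * a$3) * (a \<bullet> Q - c)) / (a$3 * a$3) > 0"
      proof (rule divide_pos_pos)
        show "0 < s * a $ 3 * (a \<bullet> Q - c)" using sa that by simp
      qed (rule a33)
      then show ?thesis unfolding eqQ by linarith
    qed
    then show "s * ps D Q3 < 0" "s * ps D Q4 < 0" using p3 p4 by auto
  qed
  have "affine hull {V, Q1, Q2} = gr D" using H HD by (rule trans)
  then show ?thesis using sg34 by blast
qed

lemma hedral_rot: "hedral_angle V Q2 Q3 Q4 Q1 = hedral_angle V Q1 Q2 Q3 Q4"
proof -
  have "{Q2, Q3, Q4, Q1} = {Q1, Q2, Q3, Q4}" by auto
  then show ?thesis unfolding hedral_angle_def by simp
qed

lemma adm_rot: "admissible_angle V Q1 Q2 Q3 Q4 \<Longrightarrow> admissible_angle V Q2 Q3 Q4 Q1"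
proof -
  assume a: "admissible_angle V Q1 Q2 Q3 Q4"
  have e: "{Q2, Q3, Q4, Q1} = {Q1, Q2, Q3, Q4}" by auto
  have c: "convex_quad Q2 Q3 Q4 Q1" using a cq_rot unfolding admissible_angle_def by blast
  have v: "V \<notin> affine hull {Q2, Q3, Q4, Q1}" using a unfolding admissible_angle_def e by blast
  have i: "\<exists>s. V + s *\<^sub>R e3 \<in> interior (hedral_angle V Q2 Q3 Q4 Q1)"
    using a unfolding admissible_angle_def hedral_rot[of V Q2 Q3 Q4 Q1] by blast
  show ?thesis unfolding admissible_angle_def using c v i by blast
qed

lemma face_lemma_adm:
  assumes "admissible_angle V Q1 Q2 Q3 Q4" "V + s *\<^sub>R e3 \<in> interior (hedral_angle V Q1 Q2 Q3 Q4)"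
  shows "\<exists>D. affine hull {V, Q1, Q2} = gr D \<and> s * ps D Q3 < 0 \<and> s * ps D Q4 < 0"
  using assms face_lemma unfolding admissible_angle_def by blast

definition S123 :: "point \<Rightarrow> point \<Rightarrow> point \<Rightarrow> point \<Rightarrow> bool" where
  "S123 D1 D2 D3 D4 \<longleftrightarrow>
     (\<forall>\<mu>. D4 - D1 = \<mu> *\<^sub>R (D3 - D2) \<longrightarrow> \<mu> > 0) \<and>
     (\<forall>\<alpha> \<beta>. \<alpha> *\<^sub>R (D2 - D1) + \<beta> *\<^sub>R (D4 - D1) = 0 \<longrightarrow> \<alpha> = 0 \<and> \<beta> = 0) \<and>
     D1 \<noteq> D2 \<and> D2 \<noteq> D3 \<and> D3 \<noteq> D4 \<and> D4 \<noteq> D1"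

lemma vertex_lemma:
  assumes adm: "admissible_angle V Q1 Q2 Q3 Q4"
  shows "\<exists>D1 D2 D3 D4. affine hull {V, Q1, Q2} = gr D1 \<and> affine hull {V, Q2, Q3} = gr D2 \<and>
           affine hull {V, Q3, Q4} = gr D3 \<and> affine hull {V, Q4, Q1} = gr D4 \<and> S123 D1 D2 D3 D4"
proof -
  obtain s where s: "V + s *\<^sub>R e3 \<in> interior (hedral_angle V Q1 Q2 Q3 Q4)"
    using adm unfolding admissible_angle_def by blast
  have adm1: "admissible_angle V Q2 Q3 Q4 Q1" using adm_rot[OF adm] .
  have adm2: "admissible_angle V Q3 Q4 Q1 Q2" using adm_rot[OF adm1] .
  have adm3: "admissible_angle V Q4 Q1 Q2 Q3" using adm_rot[OF adm2] .
  have s1: "V + s *\<^sub>R e3 \<in> interior (hedral_angle V Q2 Q3 Q4 Q1)" unfolding hedral_rot[of V Q2 Q3 Q4 Q1] by (rule s)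
  have s2: "V + s *\<^sub>R e3 \<in> interior (hedral_angle V Q3 Q4 Q1 Q2)" unfolding hedral_rot[of V Q3 Q4 Q1 Q2] by (rule s1)
  have s3: "V + s *\<^sub>R e3 \<in> interior (hedral_angle V Q4 Q1 Q2 Q3)" unfolding hedral_rot[of V Q4 Q1 Q2 Q3] by (rule s2)
  obtain D1 where D1: "affine hull {V, Q1, Q2} = gr D1" "s * ps D1 Q3 < 0" "s * ps D1 Q4 < 0"
    using face_lemma_adm[OF adm s] by blast
  obtain D2 where D2: "affine hull {V, Q2, Q3} = gr D2" "s * ps D2 Q4 < 0" "s * ps D2 Q1 < 0"
    using face_lemma_adm[OF adm1 s1] by blast
  obtain D3 where D3: "affine hull {V, Q3, Q4} = gr D3" "s * ps D3 Q1 < 0" "s * ps D3 Q2 < 0"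
    using face_lemma_adm[OF adm2 s2] by blast
  obtain D4 where D4: "affine hull {V, Q4, Q1} = gr D4" "s * ps D4 Q2 < 0" "s * ps D4 Q3 < 0"
    using face_lemma_adm[OF adm3 s3] by blast
  have z: "ps D1 Q1 = 0" "ps D1 Q2 = 0" "ps D2 Q2 = 0" "ps D2 Q3 = 0"
          "ps D3 Q3 = 0" "ps D3 Q4 = 0" "ps D4 Q4 = 0" "ps D4 Q1 = 0"
    using D1(1) D2(1) D3(1) D4(1) hull_inc[of _ "{V, Q1, Q2}"] hull_inc[of _ "{V, Q2, Q3}"]
      hull_inc[of _ "{V, Q3, Q4}"] hull_inc[of _ "{V, Q4, Q1}"]
    by (auto intro!: ps_gr)
  have nz: "ps D4 Q2 \<noteq> 0" "ps D3 Q2 \<noteq> 0" "ps D2 Q1 \<noteq> 0" "ps D1 Q3 \<noteq> 0" "ps D4 Q3 \<noteq> 0"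
    using D1 D2 D3 D4 by auto
  have hq: "hh Q (D - D') = ps D Q - ps D' Q" for Q D D' by (simp add: ps_diff)
  have S1: "\<mu> > 0" if e: "D4 - D1 = \<mu> *\<^sub>R (D3 - D2)" for \<mu>
  proof -
    have "hh Q2 (D4 - D1) = \<mu> * hh Q2 (D3 - D2)" unfolding e by (simp add: hh_scale)
    then have "ps D4 Q2 = \<mu> * ps D3 Q2" by (simp add: hq z)
    then have "s * ps D4 Q2 = \<mu> * (s * ps D3 Q2)" by simp
    show ?thesis
    proof (rule ccontr)
      assume "\<not> \<mu> > 0"
      then have "\<mu> * (s * ps D3 Q2) \<ge> 0" using D3(3) by (simp add: mult_nonpos_nonpos)
      then show False using \<open>s * ps D4 Q2 = \<mu> * (s * ps D3 Q2)\<close> D4(2) by linarith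
    qed
  qed
  have S2: "\<alpha> = 0 \<and> \<beta> = 0" if e: "\<alpha> *\<^sub>R (D2 - D1) + \<beta> *\<^sub>R (D4 - D1) = 0" for \<alpha> \<beta>
  proof -
    have h: "\<alpha> * hh Q (D2 - D1) + \<beta> * hh Q (D4 - D1) = 0" for Q
      using arg_cong[OF e, of "hh Q"] by (simp add: hh_add hh_scale)
    have "\<beta> * ps D4 Q2 = 0" using h[of Q2] by (simp add: hq z)
    then have b: "\<beta> = 0" using nz by simp
    have "\<alpha> * ps D2 Q1 = 0" using h[of Q1] b by (simp add: hq z)
    then have "\<alpha> = 0" using nz by simp
    then show ?thesis using b by simp
  qed
  have S3: "D1 \<noteq> D2 \<and> D2 \<noteq> D3 \<and> D3 \<noteq> D4 \<and> D4 \<noteq> D1"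
  proof (intro conjI)
    show "D1 \<noteq> D2" using z(1) nz(3) by metis
    show "D2 \<noteq> D3" using z(3) nz(2) by metis
    show "D3 \<noteq> D4" using z(5) nz(5) by metis
    show "D4 \<noteq> D1" using z(2) nz(1) by metis
  qed
  show ?thesis unfolding S123_def using D1(1) D2(1) D3(1) D4(1) S1 S2 S3 by blast
qed


lemma hh_uminus: "hh F (- x) = - hh F x" by (simp add: hh_def)

lemma real_k:
  fixes p1 p2 x1 x2 y1 y2 :: real
  assumes "p1 * x1 + p2 * x2 = 0" "p1 * y1 + p2 * y2 = 0"
  shows "p1 * (y1 * x2 - y2 * x1) = 0 \<and> p2 * (y1 * x2 - y2 * x1) = 0"
proof
  have "p1 * (y1 * x2 - y2 * x1) = x2 * (p1 * y1 + p2 * y2) - y2 * (p1 * x1 + p2 * x2)" by (simp add: algebra_simps)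
  then show "p1 * (y1 * x2 - y2 * x1) = 0" using assms by simp
  have "p2 * (y1 * x2 - y2 * x1) = y1 * (p1 * x1 + p2 * x2) - x1 * (p1 * y1 + p2 * y2)" by (simp add: algebra_simps)
  then show "p2 * (y1 * x2 - y2 * x1) = 0" using assms by simp
qed

lemma par_lemma:
  assumes "hh A x = 0" "hh B x = 0" "hh A y = 0" "hh B y = 0" "A$1 \<noteq> B$1 \<or> A$2 \<noteq> B$2" "y \<noteq> 0"
  shows "\<exists>c. x = c *\<^sub>R y"
proof -
  let ?p1 = "B$1 - A$1" and ?p2 = "B$2 - A$2"
  have ex: "?p1 * x$1 + ?p2 * x$2 = 0" using assms(1,2) by (simp add: hh_def algebra_simps)
  have ey: "?p1 * y$1 + ?p2 * y$2 = 0" using assms(3,4) by (simp add: hh_def algebra_simps)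
  have k1: "?p1 * (y$1 * x$2 - y$2 * x$1) = 0" "?p2 * (y$1 * x$2 - y$2 * x$1) = 0"
    using real_k[OF ex ey] by auto
  have d': "y$1 * x$2 = y$2 * x$1" using k1 assms(5) by auto
  have y3: "y$3 = A$1 * y$1 + A$2 * y$2" using assms(3) by (simp add: hh_def algebra_simps)
  have x3: "x$3 = A$1 * x$1 + A$2 * x$2" using assms(1) by (simp add: hh_def algebra_simps)
  have "y = 0 \<or> x = 0 \<or> (\<exists>c. x = c *\<^sub>R y)" using dep_helper[OF y3 x3 d'] .
  then show ?thesis using assms(6) by (metis scale_zero_left)
qed

lemma gr_top_ne:
  assumes "X \<in> gr P" "Y \<in> gr P" "X \<noteq> Y"
  shows "X$1 \<noteq> Y$1 \<or> X$2 \<noteq> Y$2"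
proof (rule ccontr)
  assume "\<not> (X$1 \<noteq> Y$1 \<or> X$2 \<noteq> Y$2)"
  then have "X$1 = Y$1" "X$2 = Y$2" by auto
  moreover then have "X$3 = Y$3" using assms(1,2) by (simp add: gr_def)
  ultimately have "X = Y" by (simp add: vec_eq_iff forall_3)
  then show False using assms(3) by simp
qed

definition indep :: "point \<Rightarrow> point \<Rightarrow> bool" where
  "indep u v \<longleftrightarrow> (\<forall>\<alpha> \<beta>. \<alpha> *\<^sub>R u + \<beta> *\<^sub>R v = 0 \<longrightarrow> \<alpha> = 0 \<and> \<beta> = 0)"

lemma indep_swap: "indep u v \<Longrightarrow> indep v u"
  unfolding indep_def by (metis add.commute)

lemma indep_scale2: "indep u v \<Longrightarrow> c \<noteq> 0 \<Longrightarrow> indep u (c *\<^sub>R v)"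
  unfolding indep_def by (metis mult_eq_0_iff scaleR_scaleR)

lemma indep_scale2n: "indep u v \<Longrightarrow> c \<noteq> 0 \<Longrightarrow> indep u (- (c *\<^sub>R v))"
  using indep_scale2[of u v "-c"] by simp

lemma indep_shear: "indep u v \<Longrightarrow> indep u (v + c *\<^sub>R u)"
  unfolding indep_def
proof (intro allI impI)
  fix \<alpha> \<beta> assume i: "\<forall>\<alpha> \<beta>. \<alpha> *\<^sub>R u + \<beta> *\<^sub>R v = 0 \<longrightarrow> \<alpha> = 0 \<and> \<beta> = 0"
    and e: "\<alpha> *\<^sub>R u + \<beta> *\<^sub>R (v + c *\<^sub>R u) = 0"
  have "(\<alpha> + \<beta> * c) *\<^sub>R u + \<beta> *\<^sub>R v = 0" using e by (simp add: algebra_simps)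
  then have "\<alpha> + \<beta> * c = 0 \<and> \<beta> = 0" using i by blast
  then show "\<alpha> = 0 \<and> \<beta> = 0" by auto
qed

lemma indep_nz: "indep u v \<Longrightarrow> u \<noteq> 0"
  unfolding indep_def by (metis scaleR_one scaleR_zero_left scaleR_zero_right add.right_neutral one_neq_zero)

lemma vertex_T:
  assumes hu: "hh G u = 0" and hv: "hh G v = 0" and hp: "hh G p = G$3" and ind: "indep u v"
  shows "det3 e3 u v \<noteq> 0 \<and> G = TP p u v"
proof -
  have u3: "u$3 = G$1 * u$1 + G$2 * u$2" using hu by (simp add: hh_def algebra_simps)
  have v3: "v$3 = G$1 * v$1 + G$2 * v$2" using hv by (simp add: hh_def algebra_simps)
  have N3: "det3 e3 u v = u$1 * v$2 - u$2 * v$1" by (simp add: det3_expand)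
  have dn: "det3 e3 u v \<noteq> 0"
  proof
    assume "det3 e3 u v = 0"
    then have d': "u$1 * v$2 = u$2 * v$1" using N3 by simp
    have "u = 0 \<or> v = 0 \<or> (\<exists>c. v = c *\<^sub>R u)" using dep_helper[OF u3 v3 d'] .
    moreover have "u \<noteq> 0" using indep_nz[OF ind] .
    moreover have "v \<noteq> 0" using indep_nz[OF indep_swap[OF ind]] .
    moreover have "v \<noteq> c *\<^sub>R u" for c
    proof
      assume "v = c *\<^sub>R u"
      then have "c *\<^sub>R u + (-1) *\<^sub>R v = 0" by simp
      then show False using ind unfolding indep_def by fastforce
    qed
    ultimately show False by blast
  qed
  have c1: "TP p u v $ 1 = G$1"
  proof -
    have "det3 e1 u v = - G$1 * det3 e3 u v" using u3 v3 by (simp add: det3_expand algebra_simps)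
    then show ?thesis using dn by (simp add: TP_comps)
  qed
  have c2: "TP p u v $ 2 = G$2"
  proof -
    have "det3 e2 u v = - G$2 * det3 e3 u v" using u3 v3 by (simp add: det3_expand algebra_simps)
    then show ?thesis using dn by (simp add: TP_comps)
  qed
  have "hh (TP p u v) p = TP p u v $ 3" using TP_hh[OF dn] by simp
  moreover have "hh (TP p u v) p = hh G p" using c1 c2 by (simp add: hh_def)
  ultimately have c3: "TP p u v $ 3 = G$3" using hp by simp
  have "G = TP p u v" using c1 c2 c3 by (simp add: vec_eq_iff forall_3)
  then show ?thesis using dn by simp
qed

locale GT =
  fixes F :: "nat \<Rightarrow> nat \<Rightarrow> point" and m n :: nat and D :: "nat \<Rightarrow> nat \<Rightarrow> point"
  assumes mn: "2 \<le> m" "2 \<le> n"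
  and net: "is_net F m n"
  and ing: "\<And>i j. i < m \<Longrightarrow> j < n \<Longrightarrow> F i j \<in> gr (D i j) \<and> F (Suc i) j \<in> gr (D i j) \<and>
               F (Suc i) (Suc j) \<in> gr (D i j) \<and> F i (Suc j) \<in> gr (D i j)"
  and S: "\<And>i j. 0 < i \<Longrightarrow> i < m \<Longrightarrow> 0 < j \<Longrightarrow> j < n \<Longrightarrow>
               S123 (D (i-1) (j-1)) (D i (j-1)) (D i j) (D (i-1) j)"
  and col: "\<And>j. j \<le> n \<Longrightarrow> \<exists>d. d \<noteq> 0 \<and> (\<forall>i\<le>m. hh (F i j) d = 0)"
  and row: "\<And>i. i \<le> m \<Longrightarrow> \<exists>Y \<omega>. (Y \<noteq> 0 \<or> \<omega> \<noteq> 0) \<and> (\<forall>j\<le>n. hh (F i j) Y = \<omega> * F i j $ 3)"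
begin

lemma cq: "i < m \<Longrightarrow> j < n \<Longrightarrow> convex_quad (F i j) (F (Suc i) j) (F (Suc i) (Suc j)) (F i (Suc j))"
  using net unfolding is_net_def by blast

lemma ing': "i < m \<Longrightarrow> j < n \<Longrightarrow> p \<le> 1 \<Longrightarrow> q \<le> 1 \<Longrightarrow> hh (F (i+p) (j+q)) (D i j) = F (i+p) (j+q) $ 3"
  using ing[of i j] by (auto simp: in_gr le_Suc_eq)

lemma ing_gr: "i < m \<Longrightarrow> j < n \<Longrightarrow> p \<le> 1 \<Longrightarrow> q \<le> 1 \<Longrightarrow> F (i+p) (j+q) \<in> gr (D i j)"
  using ing'[of i j p q] by (simp add: in_gr)

lemma noncols:
  assumes "i < m" "j < n"
  shows "\<not> collinear {F i j, F (Suc i) j, F (Suc i) (Suc j)}"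
    "\<not> collinear {F (Suc i) j, F (Suc i) (Suc j), F i (Suc j)}"
    "\<not> collinear {F (Suc i) (Suc j), F i (Suc j), F i j}"
    "\<not> collinear {F i (Suc j), F i j, F (Suc i) j}"
  using cq_noncol[OF cq[OF assms]] cq_noncol[OF cq_rot[OF cq[OF assms]]]
    cq_noncol[OF cq_rot[OF cq_rot[OF cq[OF assms]]]] cq_noncol[OF cq_rot[OF cq_rot[OF cq_rot[OF cq[OF assms]]]]]
  by auto

lemma face_zero:
  assumes ij: "i < m" "j < n" and pq: "p0 \<le> 1" "q0 \<le> 1"
    and z: "\<And>p q. p \<le> 1 \<Longrightarrow> q \<le> 1 \<Longrightarrow> (p, q) \<noteq> (p0, q0) \<Longrightarrow> hh (F (i+p) (j+q)) z = 0"
  shows "z = 0"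
proof -
  have g: "F i j \<in> gr (D i j)" "F (Suc i) j \<in> gr (D i j)" "F (Suc i) (Suc j) \<in> gr (D i j)" "F i (Suc j) \<in> gr (D i j)"
    using ing[OF ij] by auto
  note nc = noncols[OF ij]
  have z00: "(0,0) \<noteq> (p0,q0) \<Longrightarrow> hh (F i j) z = 0" using z[of 0 0] by simp
  have z10: "(1,0) \<noteq> (p0,q0) \<Longrightarrow> hh (F (Suc i) j) z = 0" using z[of 1 0] by simp
  have z11: "(1,1) \<noteq> (p0,q0) \<Longrightarrow> hh (F (Suc i) (Suc j)) z = 0" using z[of 1 1] by simp
  have z01: "(0,1) \<noteq> (p0,q0) \<Longrightarrow> hh (F i (Suc j)) z = 0" using z[of 0 1] by simp
  consider "(p0,q0) = (0,0)" | "(p0,q0) = (1,0)" | "(p0,q0) = (1,1)" | "(p0,q0) = (0,1)"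
    using pq by (auto simp: le_Suc_eq)
  then show ?thesis
  proof cases
    case 1
    then show ?thesis using hh_three_zero[OF z10 z11 z01 noncol_top[OF g(2,3,4) nc(2)]] by auto
  next
    case 2
    then show ?thesis using hh_three_zero[OF z11 z01 z00 noncol_top[OF g(3,4,1) nc(3)]] by auto
  next
    case 3
    then show ?thesis using hh_three_zero[OF z01 z00 z10 noncol_top[OF g(4,1,2) nc(4)]] by auto
  next
    case 4
    then show ?thesis using hh_three_zero[OF z00 z10 z11 noncol_top[OF g(1,2,3) nc(1)]] by auto
  qed
qed

lemma S': "0 < i \<Longrightarrow> i < m \<Longrightarrow> 0 < j \<Longrightarrow> j < n \<Longrightarrow>
  (\<forall>\<mu>. D (i-1) j - D (i-1) (j-1) = \<mu> *\<^sub>R (D i j - D i (j-1)) \<longrightarrow> \<mu> > 0) \<and>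
  indep (D i (j-1) - D (i-1) (j-1)) (D (i-1) j - D (i-1) (j-1)) \<and>
  D (i-1) (j-1) \<noteq> D i (j-1) \<and> D i (j-1) \<noteq> D i j \<and> D i j \<noteq> D (i-1) j \<and> D (i-1) j \<noteq> D (i-1) (j-1)"
  using S[of i j] unfolding S123_def indep_def by blast

lemma adjR: "f < m \<Longrightarrow> 1 \<le> l \<Longrightarrow> l < n \<Longrightarrow> D f (l-1) \<noteq> D f l"
proof -
  assume a: "f < m" "1 \<le> l" "l < n"
  show ?thesis
  proof (cases "f \<ge> 1")
    case True
    then show ?thesis using S'[of f l] a by auto
  next
    case False
    then have "f = 0" by simp
    then show ?thesis using S'[of 1 l] a mn by auto
  qed
qed

lemma adjC: "g < n \<Longrightarrow> 1 \<le> i \<Longrightarrow> i < m \<Longrightarrow> D (i-1) g \<noteq> D i g"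
proof -
  assume a: "g < n" "1 \<le> i" "i < m"
  show ?thesis
  proof (cases "g \<ge> 1")
    case True
    then show ?thesis using S'[of i g] a by auto
  next
    case False
    then have "g = 0" by simp
    then show ?thesis using S'[of i 1] a mn by auto
  qed
qed

lemma topd_row:
  assumes "k \<le> m" "l < n"
  shows "F k l $1 \<noteq> F k (Suc l) $1 \<or> F k l $2 \<noteq> F k (Suc l) $2"
proof (cases "k < m")
  case True
  have "F k l \<noteq> F k (Suc l)" using noncols(4)[OF True assms(2)] by auto
  then show ?thesis using gr_top_ne ing[OF True assms(2)] by blast
next
  case False
  then obtain f where f: "k = Suc f" "f < m" using assms mn by (cases k) auto
  have "F (Suc f) l \<noteq> F (Suc f) (Suc l)" using noncols(2)[OF f(2) assms(2)] by auto
  then show ?thesis using gr_top_ne ing[OF f(2) assms(2)] f by blast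
qed

lemma topd_col:
  assumes "k < m" "l \<le> n"
  shows "F k l $1 \<noteq> F (Suc k) l $1 \<or> F k l $2 \<noteq> F (Suc k) l $2"
proof (cases "l < n")
  case True
  have "F k l \<noteq> F (Suc k) l" using noncols(1)[OF assms(1) True] by auto
  then show ?thesis using gr_top_ne ing[OF assms(1) True] by blast
next
  case False
  then obtain g where g: "l = Suc g" "g < n" using assms mn by (cases l) auto
  have "F (Suc k) (Suc g) \<noteq> F k (Suc g)" using noncols(2)[OF assms(1) g(2)] by auto
  then show ?thesis using gr_top_ne ing[OF assms(1) g(2)] g by metis
qed


lemma face_eq:
  assumes ij: "i < m" "j < n" and pq: "p0 \<le> 1" "q0 \<le> 1"
    and h: "\<And>p q. p \<le> 1 \<Longrightarrow> q \<le> 1 \<Longrightarrow> (p, q) \<noteq> (p0, q0) \<Longrightarrow>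
              hh (F (i+p) (j+q)) X = c * F (i+p) (j+q) $ 3"
  shows "X = c *\<^sub>R D i j"
proof -
  have "X - c *\<^sub>R D i j = 0"
  proof (rule face_zero[OF ij pq])
    fix p q assume "p \<le> 1" "q \<le> 1" "(p, q) \<noteq> (p0, q0)"
    then show "hh (F (i + p) (j + q)) (X - c *\<^sub>R D i j) = 0"
      using h ing'[OF ij, of p q] by (simp add: hh_diff hh_scale)
  qed
  then show ?thesis by simp
qed

lemma face_eq_row:
  assumes "f < m" "g < n" "pk \<le> 1" "q0 \<le> 1"
    and h1: "hh (F (f+pk) g) X = c * F (f+pk) g $ 3"
    and h2: "hh (F (f+pk) (Suc g)) X = c * F (f+pk) (Suc g) $ 3"
    and h3: "hh (F (f+(1-pk)) (g+(1-q0))) X = c * F (f+(1-pk)) (g+(1-q0)) $ 3"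
  shows "X = c *\<^sub>R D f g"
proof (rule face_eq[OF assms(1,2), of "1-pk" q0])
  fix p q assume pq: "p \<le> 1" "q \<le> 1" "(p, q) \<noteq> (1 - pk, q0)"
  show "hh (F (f + p) (g + q)) X = c * F (f + p) (g + q) $ 3"
  proof (cases "p = pk")
    case True
    then show ?thesis using h1 h2 pq by (cases q) auto
  next
    case False
    then have p: "p = 1 - pk" using pq assms(3) by auto
    then have "q = 1 - q0" using pq assms(4) by auto
    then show ?thesis using h3 p by simp
  qed
qed (use assms in auto)

definition "dd j = (SOME d. d \<noteq> 0 \<and> (\<forall>i\<le>m. hh (F i j) d = 0))"

lemma dd: "j \<le> n \<Longrightarrow> dd j \<noteq> 0 \<and> (\<forall>i\<le>m. hh (F i j) (dd j) = 0)"
  unfolding dd_def using col[of j] by (rule someI_ex)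

definition "YW i = (SOME p. (fst p \<noteq> 0 \<or> snd p \<noteq> 0) \<and> (\<forall>j\<le>n. hh (F i j) (fst p) = snd p * F i j $ 3))"
definition "YY i = fst (YW i)"
definition "WW i = snd (YW i)"

lemma YW: "i \<le> m \<Longrightarrow> (YY i \<noteq> 0 \<or> WW i \<noteq> 0) \<and> (\<forall>j\<le>n. hh (F i j) (YY i) = WW i * F i j $ 3)"
proof -
  assume "i \<le> m"
  then obtain Y \<omega> where "(Y \<noteq> 0 \<or> \<omega> \<noteq> 0) \<and> (\<forall>j\<le>n. hh (F i j) Y = \<omega> * F i j $ 3)" using row by blast
  then have "\<exists>p. (fst p \<noteq> 0 \<or> snd p \<noteq> 0) \<and> (\<forall>j\<le>n. hh (F i j) (fst p) = snd p * F i j $ 3)"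
    by (intro exI[of _ "(Y, \<omega>)"]) simp
  then show ?thesis unfolding YY_def WW_def YW_def by (rule someI_ex)
qed

definition "ZZ f pk l = YY (f+pk) - WW (f+pk) *\<^sub>R D f (l-1)"

lemma rz_a:
  assumes "f < m" "pk \<le> 1" "1 \<le> l" "l \<le> n" "q \<le> 1"
  shows "hh (F (f+pk) (l-1+q)) (ZZ f pk l) = 0"
proof -
  have k: "f + pk \<le> m" using assms by auto
  have "hh (F (f+pk) (l-1+q)) (YY (f+pk)) = WW (f+pk) * F (f+pk) (l-1+q) $ 3"
    using YW[OF k] assms by auto
  moreover have "hh (F (f+pk) (l-1+q)) (D f (l-1)) = F (f+pk) (l-1+q) $ 3"
    using ing'[of f "l-1" pk q] assms by auto
  ultimately show ?thesis by (simp add: ZZ_def hh_diff hh_scale)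
qed

lemma rz_ne:
  assumes f: "f < m" and pk: "pk \<le> 1" and l: "1 \<le> l" "l \<le> n"
  shows "ZZ f pk l \<noteq> 0"
proof
  assume z: "ZZ f pk l = 0"
  let ?k = "f + pk" and ?k' = "f + (1 - pk)" and ?Y = "YY (f+pk)" and ?w = "WW (f+pk)"
  have k: "?k \<le> m" using f pk by auto
  have Y: "?Y = ?w *\<^sub>R D f (l-1)" using z by (simp add: ZZ_def)
  have w: "?w \<noteq> 0" using YW[OF k] Y by auto
  have rowD: "hh (F ?k l') (D f (l-1)) = F ?k l' $ 3" if "l' \<le> n" for l'
  proof -
    have "hh (F ?k l') ?Y = ?w * F ?k l' $ 3" using YW[OF k] that by auto
    then have "?w * hh (F ?k l') (D f (l-1)) = ?w * F ?k l' $ 3" using Y by (simp add: hh_scale)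
    then show ?thesis using w by simp
  qed
  show False
  proof (cases "l < n")
    case True
    have "D f (l-1) = 1 *\<^sub>R D f l"
    proof (rule face_eq_row[OF f True pk, of 1])
      show "hh (F (f + pk) l) (D f (l - 1)) = 1 * F (f + pk) l $ 3" using rowD True by simp
      show "hh (F (f + pk) (Suc l)) (D f (l - 1)) = 1 * F (f + pk) (Suc l) $ 3" using rowD True by simp
      show "hh (F (f + (1 - pk)) (l + (1 - 1))) (D f (l - 1)) = 1 * F (f + (1 - pk)) (l + (1 - 1)) $ 3"
        using ing'[of f "l-1" "1-pk" 1] f l True by simp
    qed simp
    then show False using adjR[OF f l(1) True] by simp
  next
    case False
    then have ln: "l = n" using l by simp
    have "D f (n-1) = 1 *\<^sub>R D f (n-2)"
    proof (rule face_eq_row[OF f _ pk, of "n-2" 0])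
      show "n - 2 < n" using mn by simp
      have e1: "Suc (n-2) = n - 1" using mn by simp
      show "hh (F (f + pk) (n - 2)) (D f (n - 1)) = 1 * F (f + pk) (n - 2) $ 3" using rowD ln by simp
      show "hh (F (f + pk) (Suc (n - 2))) (D f (n - 1)) = 1 * F (f + pk) (Suc (n - 2)) $ 3"
        using rowD ln e1 by simp
      show "hh (F (f + (1 - pk)) (n - 2 + (1 - 0))) (D f (n - 1)) = 1 * F (f + (1 - pk)) (n - 2 + (1 - 0)) $ 3"
        using ing'[of f "n-1" "1-pk" 0] f mn e1 by simp
    qed simp
    then have e: "D f (n-1) = D f (n-2)" by simp
    have "D f (n - 1 - 1) \<noteq> D f (n-1)" using adjR[OF f, of "n-1"] mn by simp
    moreover have "n - 1 - 1 = n - 2" by simp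
    ultimately show False using e by simp
  qed
qed


lemma rz_ind:
  assumes f: "f < m" and pk: "pk \<le> 1" and l: "1 \<le> l" "l < n"
  shows "indep (ZZ f pk l) (D f l - D f (l-1))"
  unfolding indep_def
proof (intro allI impI)
  fix \<alpha> \<beta> assume e: "\<alpha> *\<^sub>R ZZ f pk l + \<beta> *\<^sub>R (D f l - D f (l - 1)) = 0"
  let ?k = "f + pk" and ?k' = "f + (1 - pk)" and ?Y = "YY (f+pk)" and ?w = "WW (f+pk)"
  have k: "?k \<le> m" using f pk by auto
  have l1: "l - 1 + 1 = l" "Suc (l - 1) = l" using l by auto
  have YWk: "hh (F ?k l') ?Y = ?w * F ?k l' $ 3" if "l' \<le> n" for l' using YW[OF k] that by auto
  have g1: "hh (F ?k' l) (D f l) = F ?k' l $ 3" using ing'[of f l "1-pk" 0] f l by simp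
  have g2: "hh (F ?k' l) (D f (l-1)) = F ?k' l $ 3" using ing'[of f "l-1" "1-pk" 1] f l l1 by simp
  have un: "D f l - D f (l-1) \<noteq> 0" using adjR[OF f l] by simp
  have a0: "\<alpha> = 0"
  proof (rule ccontr)
    assume a: "\<alpha> \<noteq> 0"
    have "ZZ f pk l = (- \<beta> / \<alpha>) *\<^sub>R (D f l - D f (l - 1))"
    proof -
      have "\<alpha> *\<^sub>R ZZ f pk l = - \<beta> *\<^sub>R (D f l - D f (l - 1))" using e by (simp add: eq_neg_iff_add_eq_0)
      then have "(1/\<alpha>) *\<^sub>R (\<alpha> *\<^sub>R ZZ f pk l) = (1/\<alpha>) *\<^sub>R (- \<beta> *\<^sub>R (D f l - D f (l - 1)))" by simp
      then show ?thesis using a by simp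
    qed
    then have "hh (F ?k' l) (ZZ f pk l) = 0" using g1 g2 by (simp add: hh_scale hh_diff hh_uminus)
    then have h3: "hh (F ?k' l) ?Y = ?w * F ?k' l $ 3" using g2 by (simp add: ZZ_def hh_diff hh_scale)
    have Y1: "?Y = ?w *\<^sub>R D f (l-1)"
    proof (rule face_eq_row[OF f _ pk, of "l-1" 0])
      show "l - 1 < n" using l by simp
      show "hh (F (f + pk) (l - 1)) ?Y = ?w * F (f + pk) (l - 1) $ 3" using YWk l by simp
      show "hh (F (f + pk) (Suc (l - 1))) ?Y = ?w * F (f + pk) (Suc (l - 1)) $ 3" using YWk l l1 by simp
      show "hh (F (f + (1 - pk)) (l - 1 + (1 - 0))) ?Y = ?w * F (f + (1 - pk)) (l - 1 + (1 - 0)) $ 3"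
        using h3 l1 by simp
    qed simp
    have Y2: "?Y = ?w *\<^sub>R D f l"
    proof (rule face_eq_row[OF f l(2) pk, of 1])
      show "hh (F (f + pk) l) ?Y = ?w * F (f + pk) l $ 3" using YWk l by simp
      show "hh (F (f + pk) (Suc l)) ?Y = ?w * F (f + pk) (Suc l) $ 3" using YWk l by simp
      show "hh (F (f + (1 - pk)) (l + (1 - 1))) ?Y = ?w * F (f + (1 - pk)) (l + (1 - 1)) $ 3"
        using h3 by simp
    qed simp
    have "?w *\<^sub>R (D f (l-1) - D f l) = 0" using Y1 Y2 by (simp add: algebra_simps) metis
    then have "?w = 0" using adjR[OF f l] by simp
    then have "?Y = 0" using Y1 by simp
    then show False using YW[OF k] \<open>?w = 0\<close> by simp
  qed
  then have "\<beta> *\<^sub>R (D f l - D f (l - 1)) = 0" using e by simp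
  then have "\<beta> = 0" using un by simp
  then show "\<alpha> = 0 \<and> \<beta> = 0" using a0 by simp
qed


lemma colB:
  assumes i: "1 \<le> i" "i < m" and g: "g < n" and qj: "qj \<le> 1"
  shows "indep (dd (g+qj)) (D i g - D (i-1) g)"
  unfolding indep_def
proof (intro allI impI)
  fix \<alpha> \<beta> assume e: "\<alpha> *\<^sub>R dd (g+qj) + \<beta> *\<^sub>R (D i g - D (i-1) g) = 0"
  let ?d = "dd (g+qj)" and ?w = "D i g - D (i-1) g"
  have jn: "g + qj \<le> n" using g qj by simp
  have d: "?d \<noteq> 0" "\<And>i'. i' \<le> m \<Longrightarrow> hh (F i' (g+qj)) ?d = 0" using dd[OF jn] by auto
  have wn: "?w \<noteq> 0" using adjC[OF g _ i(2)] i by simp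
  have b0: "\<beta> = 0"
  proof (rule ccontr)
    assume b: "\<beta> \<noteq> 0"
    have "?w = (- \<alpha> / \<beta>) *\<^sub>R ?d"
    proof -
      have "\<beta> *\<^sub>R ?w = - \<alpha> *\<^sub>R ?d" using e by (simp add: eq_neg_iff_add_eq_0 add.commute)
      then have "(1/\<beta>) *\<^sub>R (\<beta> *\<^sub>R ?w) = (1/\<beta>) *\<^sub>R (- \<alpha> *\<^sub>R ?d)" by simp
      then show ?thesis using b by simp
    qed
    moreover have "- \<alpha> / \<beta> \<noteq> 0" using wn calculation by auto
    moreover have "hh (F i (g + (1-qj))) ?w = 0"
    proof -
      have i1: "i - 1 + 1 = i" using i by simp
      have "hh (F i (g + (1-qj))) (D i g) = F i (g + (1-qj)) $ 3"
        using ing'[of i g 0 "1-qj"] i g by simp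
      moreover have "hh (F i (g + (1-qj))) (D (i-1) g) = F i (g + (1-qj)) $ 3"
        using ing'[of "i-1" g 1 "1-qj"] i g i1 by simp
      ultimately show ?thesis by (simp add: hh_diff)
    qed
    ultimately have h3: "hh (F i (g + (1-qj))) ?d = 0" by (simp add: hh_scale hh_uminus)
    have "?d = 0"
    proof (rule face_zero[OF i(2) g, of 1 "1-qj"])
      fix p q :: nat assume pq: "p \<le> 1" "q \<le> 1" "(p, q) \<noteq> (1, 1 - qj)"
      show "hh (F (i + p) (g + q)) ?d = 0"
      proof (cases "q = qj")
        case True
        then show ?thesis using d(2)[of "i+p"] pq i by simp
      next
        case False
        then have "q = 1 - qj" "p = 0" using pq qj by auto
        then show ?thesis using h3 by simp
      qed
    qed auto
    then show False using d(1) by simp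
  qed
  then have "\<alpha> *\<^sub>R ?d = 0" using e by simp
  then have "\<alpha> = 0" using d(1) by simp
  then show "\<alpha> = 0 \<and> \<beta> = 0" using b0 by simp
qed

lemma corner:
  assumes f: "f < m" and pk: "pk \<le> 1" and g: "g < n" and qj: "qj \<le> 1"
  shows "indep (dd (g+qj)) (ZZ f pk (Suc g))"
  unfolding indep_def
proof (intro allI impI)
  fix \<alpha> \<beta> assume e: "\<alpha> *\<^sub>R dd (g+qj) + \<beta> *\<^sub>R ZZ f pk (Suc g) = 0"
  let ?d = "dd (g+qj)" and ?Z = "ZZ f pk (Suc g)"
  let ?k = "f + pk" and ?k' = "f + (1 - pk)" and ?Y = "YY (f+pk)" and ?w = "WW (f+pk)"
  have k: "?k \<le> m" "?k' \<le> m" using f pk by auto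
  have jn: "g + qj \<le> n" using g qj by simp
  have d: "?d \<noteq> 0" "\<And>i'. i' \<le> m \<Longrightarrow> hh (F i' (g+qj)) ?d = 0" using dd[OF jn] by auto
  have Zn: "?Z \<noteq> 0" using rz_ne[OF f pk] g by simp
  have YWk: "hh (F ?k l') ?Y = ?w * F ?k l' $ 3" if "l' \<le> n" for l' using YW[OF k(1)] that by auto
  have b0: "\<beta> = 0"
  proof (rule ccontr)
    assume b: "\<beta> \<noteq> 0"
    have "?Z = (- \<alpha> / \<beta>) *\<^sub>R ?d"
    proof -
      have "\<beta> *\<^sub>R ?Z = - \<alpha> *\<^sub>R ?d" using e by (simp add: eq_neg_iff_add_eq_0 add.commute)
      then have "(1/\<beta>) *\<^sub>R (\<beta> *\<^sub>R ?Z) = (1/\<beta>) *\<^sub>R (- \<alpha> *\<^sub>R ?d)" by simp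
      then show ?thesis using b by simp
    qed
    then have "hh (F ?k' (g+qj)) ?Z = 0" using d(2)[OF k(2)] by (simp add: hh_scale hh_uminus)
    moreover have "hh (F ?k' (g+qj)) (D f g) = F ?k' (g+qj) $ 3" using ing'[of f g "1-pk" qj] f g qj by simp
    ultimately have h3: "hh (F ?k' (g+qj)) ?Y = ?w * F ?k' (g+qj) $ 3"
      by (simp add: ZZ_def hh_diff hh_scale)
    have "?Y = ?w *\<^sub>R D f g"
    proof (rule face_eq_row[OF f g pk, of "1-qj"])
      show "hh (F (f + pk) g) ?Y = ?w * F (f + pk) g $ 3" using YWk g by simp
      show "hh (F (f + pk) (Suc g)) ?Y = ?w * F (f + pk) (Suc g) $ 3" using YWk g by simp
      show "hh (F (f + (1 - pk)) (g + (1 - (1 - qj)))) ?Y = ?w * F (f + (1 - pk)) (g + (1 - (1 - qj))) $ 3"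
        using h3 qj by simp
    qed simp
    then have "?Z = 0" by (simp add: ZZ_def)
    then show False using Zn by simp
  qed
  then have "\<alpha> *\<^sub>R ?d = 0" using e by simp
  then have "\<alpha> = 0" using d(1) by simp
  then show "\<alpha> = 0 \<and> \<beta> = 0" using b0 by simp
qed


definition "EE k l = D k l - D k (l-1)"

lemma E_kill:
  assumes "k < m" "1 \<le> l" "l < n" "p \<le> 1"
  shows "hh (F (k+p) l) (EE k l) = 0"
proof -
  have "hh (F (k+p) (l + 0)) (D k l) = F (k+p) (l+0) $ 3" using ing'[of k l p 0] assms by simp
  moreover have "hh (F (k+p) (l - 1 + 1)) (D k (l-1)) = F (k+p) (l-1+1) $ 3" using ing'[of k "l-1" p 1] assms by simp
  moreover have "l - 1 + 1 = l" using assms by simp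
  ultimately show ?thesis by (simp add: EE_def hh_diff)
qed

lemma E_par:
  assumes "k < m" "1 \<le> l" "l < n"
  shows "\<exists>c. EE k l = c *\<^sub>R dd l"
proof (rule par_lemma)
  show "hh (F k l) (EE k l) = 0" using E_kill[of k l 0] assms by simp
  show "hh (F (Suc k) l) (EE k l) = 0" using E_kill[of k l 1] assms by simp
  show "hh (F k l) (dd l) = 0" "hh (F (Suc k) l) (dd l) = 0" "dd l \<noteq> 0" using dd[of l] assms by auto
  show "F k l $ 1 \<noteq> F (Suc k) l $ 1 \<or> F k l $ 2 \<noteq> F (Suc k) l $ 2" using topd_col assms by simp
qed

lemma E_nz: "k < m \<Longrightarrow> 1 \<le> l \<Longrightarrow> l < n \<Longrightarrow> EE k l \<noteq> 0"
  using adjR[of k l] by (simp add: EE_def)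

lemma E_ratio:
  assumes k: "1 \<le> k" "k < m" and l: "1 \<le> l" "l < n"
  shows "\<exists>r>0. EE k l = r *\<^sub>R EE (k-1) l"
proof -
  obtain c1 where c1: "EE k l = c1 *\<^sub>R dd l" using E_par k l by blast
  have km: "k - 1 < m" using k by simp
  obtain c0 where c0: "EE (k-1) l = c0 *\<^sub>R dd l" using E_par[OF km l] by blast
  have n1: "c1 \<noteq> 0" using E_nz[of k l] k l c1 by auto
  have n0: "c0 \<noteq> 0" using E_nz[of "k-1" l] k l c0 by auto
  have "EE (k-1) l = (c0 / c1) *\<^sub>R EE k l" using c0 c1 n1 by simp
  then have "c0 / c1 > 0" using S'[of k l] k l by (simp add: EE_def)
  then have pos: "c1 / c0 > 0" by (auto simp: zero_less_divide_iff)
  have "EE k l = (c1 / c0) *\<^sub>R EE (k-1) l" using c0 c1 n0 by simp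
  then show ?thesis using pos by blast
qed

definition "rr k l = (SOME r. r > 0 \<and> EE k l = r *\<^sub>R EE (k-1) l)"

lemma rr: "1 \<le> k \<Longrightarrow> k < m \<Longrightarrow> 1 \<le> l \<Longrightarrow> l < n \<Longrightarrow> rr k l > 0 \<and> EE k l = rr k l *\<^sub>R EE (k-1) l"
  unfolding rr_def by (rule someI_ex) (rule E_ratio)

definition "ww k l = D k (l-1) - D (k-1) (l-1)"

lemma w_par:
  assumes k: "1 \<le> k" "k < m" and l: "1 \<le> l" "l \<le> n"
  shows "\<exists>c. ww k l = c *\<^sub>R ZZ (k-1) 1 l"
proof (rule par_lemma)
  have kk: "k - 1 + 1 = k" "k - 1 < m" using k by auto
  have l1: "l - 1 + 1 = l" "l - 1 < n" using l by auto
  have a: "hh (F k (l-1+q)) (ZZ (k-1) 1 l) = 0" if "q \<le> 1" for q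
    using rz_a[of "k-1" 1 l q] kk l that by simp
  show "hh (F k (l-1)) (ZZ (k-1) 1 l) = 0" using a[of 0] by simp
  show "hh (F k l) (ZZ (k-1) 1 l) = 0" using a[of 1] l1 by simp
  show "ZZ (k-1) 1 l \<noteq> 0" using rz_ne[of "k-1" 1 l] kk l by simp
  have b: "hh (F k (l-1+q)) (ww k l) = 0" if "q \<le> 1" for q
  proof -
    have "hh (F (k+0) (l-1+q)) (D k (l-1)) = F (k+0) (l-1+q) $ 3" using ing'[of k "l-1" 0 q] k l1 that by simp
    moreover have "hh (F (k-1+1) (l-1+q)) (D (k-1) (l-1)) = F (k-1+1) (l-1+q) $ 3"
      using ing'[of "k-1" "l-1" 1 q] kk l1 that by simp
    ultimately show ?thesis using kk by (simp add: ww_def hh_diff)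
  qed
  show "hh (F k (l-1)) (ww k l) = 0" using b[of 0] by simp
  show "hh (F k l) (ww k l) = 0" using b[of 1] l1 by simp
  show "F k (l - 1) $ 1 \<noteq> F k l $ 1 \<or> F k (l - 1) $ 2 \<noteq> F k l $ 2"
    using topd_row[of k "l-1"] k l1 by simp
qed

definition "cw k l = (SOME c. ww k l = c *\<^sub>R ZZ (k-1) 1 l)"

lemma cw: "1 \<le> k \<Longrightarrow> k < m \<Longrightarrow> 1 \<le> l \<Longrightarrow> l \<le> n \<Longrightarrow> ww k l = cw k l *\<^sub>R ZZ (k-1) 1 l"
  unfolding cw_def by (rule someI_ex) (rule w_par)

lemma rr_step:
  assumes k: "1 \<le> k" "k < m" and l: "1 \<le> l" "l < n"
  shows "cw k (Suc l) = cw k l \<and> rr k l = 1 - cw k (Suc l) * WW k"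
proof -
  let ?Z = "ZZ (k-1) 1 l" and ?u = "EE (k-1) l" and ?\<omega> = "WW k"
  have kk: "k - 1 + 1 = k" "k - 1 < m" using k by auto
  have ind: "indep ?Z ?u" using rz_ind[of "k-1" 1 l] kk l by (simp add: EE_def)
  have Z1: "ZZ (k-1) 1 (Suc l) = ?Z - ?\<omega> *\<^sub>R ?u"
    using kk l by (simp add: ZZ_def EE_def algebra_simps)
  have w1: "ww k (Suc l) = ww k l + EE k l - ?u"
    using l by (simp add: ww_def EE_def algebra_simps)
  have r: "EE k l = rr k l *\<^sub>R ?u" using rr[OF k l] by simp
  have c1: "ww k (Suc l) = cw k (Suc l) *\<^sub>R ZZ (k-1) 1 (Suc l)" using cw[OF k, of "Suc l"] l by simp
  have c0: "ww k l = cw k l *\<^sub>R ?Z" using cw[OF k, of l] l by simp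
  have "(cw k (Suc l) - cw k l) *\<^sub>R ?Z + (1 - cw k (Suc l) * ?\<omega> - rr k l) *\<^sub>R ?u = 0"
  proof -
    have "cw k (Suc l) *\<^sub>R (?Z - ?\<omega> *\<^sub>R ?u) = cw k l *\<^sub>R ?Z + rr k l *\<^sub>R ?u - ?u"
      using c1 c0 w1 r Z1 by simp
    then show ?thesis by (simp add: algebra_simps)
  qed
  then have h: "cw k (Suc l) - cw k l = 0 \<and> 1 - cw k (Suc l) * ?\<omega> - rr k l = 0"
    using ind unfolding indep_def by blast
  have h1: "cw k (Suc l) = cw k l" using h by simp
  have h2: "rr k l = 1 - cw k (Suc l) * ?\<omega>" using h by linarith
  show ?thesis using h1 h2 by simp
qed

lemma rr_const:
  assumes k: "1 \<le> k" "k < m" and l: "1 \<le> l" "l < n"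
  shows "rr k l = rr k 1"
  using l
proof (induction l)
  case 0
  then show ?case by simp
next
  case (Suc l)
  show ?case
  proof (cases "l = 0")
    case True
    then show ?thesis by simp
  next
    case False
    then have "1 \<le> l" "l < n" using Suc by auto
    then have "rr k l = rr k (Suc l)" using rr_step[OF k, of l] rr_step[OF k, of "Suc l"] Suc by simp
    then show ?thesis using Suc \<open>1 \<le> l\<close> \<open>l < n\<close> by simp
  qed
qed

definition "sp k = (\<Prod>i\<in>{1..<k}. rr i 1)"

lemma sp_pos: "k \<le> m \<Longrightarrow> sp k > 0"
  unfolding sp_def using rr mn by (intro prod_pos) auto

lemma sp1: "sp 1 = 1" "sp (Suc 0) = 1" by (simp_all add: sp_def)

lemma sp_Suc: "1 \<le> k \<Longrightarrow> sp (Suc k) = sp k * rr k 1"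
  unfolding sp_def by (simp add: prod.atLeastLessThan_Suc)

lemma EE_sp:
  assumes "1 \<le> k" "k \<le> m" "1 \<le> l" "l < n"
  shows "EE (k-1) l = sp k *\<^sub>R EE 0 l"
  using assms
proof (induction k)
  case 0
  then show ?case by simp
next
  case (Suc k)
  show ?case
  proof (cases "k = 0")
    case True
    then show ?thesis by (simp add: sp1)
  next
    case False
    then have k: "1 \<le> k" "k < m" using Suc by auto
    have "EE k l = rr k l *\<^sub>R EE (k-1) l" using rr[OF k Suc.prems(3,4)] by simp
    also have "\<dots> = rr k 1 *\<^sub>R (sp k *\<^sub>R EE 0 l)" using Suc k rr_const[OF k Suc.prems(3,4)] by simp
    also have "\<dots> = sp (Suc k) *\<^sub>R EE 0 l" using sp_Suc[OF k(1)] by (simp add: mult.commute)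
    finally show ?thesis by simp
  qed
qed


definition "lam i = 1 / (\<bar>WW i\<bar> + 1)"
definition "bb l = (if l = 0 then D 0 0 - dd 0 else if l \<le> n then D 0 (l-1) else D 0 (n-1) + dd n)"
definition "ai k = D (k-1) 0 - sp k *\<^sub>R D 0 0"
definition "sg k = (if k = 0 then 1 - lam 0 * WW 0 else if k \<le> m then sp k else (1 - lam m * WW m) * sp m)"
definition "aa k = (if k = 0 then (1 - lam 0 * WW 0) *\<^sub>R ai 1 + lam 0 *\<^sub>R YY 0
                   else if k \<le> m then ai k else (1 - lam m * WW m) *\<^sub>R ai m + lam m *\<^sub>R YY m)"
definition "Qf k l = aa k + sg k *\<^sub>R bb l"

lemma lam: "lam i > 0" "lam i * WW i < 1"
proof -
  show "lam i > 0" by (simp add: lam_def add_nonneg_pos)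
  have "lam i * WW i = WW i / (\<bar>WW i\<bar> + 1)" by (simp add: lam_def)
  also have "\<dots> < 1" by (simp add: divide_less_eq add_nonneg_pos)
  finally show "lam i * WW i < 1" .
qed

lemma sg_pos: "k \<le> Suc m \<Longrightarrow> sg k > 0"
  using sp_pos[of k] sp_pos[of m] lam[of 0] lam[of m] by (auto simp: sg_def)

lemma sg1: "sg 1 = 1" using mn by (simp add: sg_def sp1)

lemma Q_int_aux:
  assumes k: "1 \<le> k" "k \<le> m" and l: "1 \<le> l" "l \<le> n"
  shows "D (k-1) (l-1) = ai k + sp k *\<^sub>R D 0 (l-1)"
  using l
proof (induction l)
  case 0
  then show ?case by simp
next
  case (Suc l)
  show ?case
  proof (cases "l = 0")
    case True
    then show ?thesis by (simp add: ai_def)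
  next
    case False
    then have l': "1 \<le> l" "l < n" using Suc by auto
    have "D (k-1) l = D (k-1) (l-1) + EE (k-1) l" by (simp add: EE_def)
    also have "\<dots> = ai k + sp k *\<^sub>R D 0 (l-1) + sp k *\<^sub>R EE 0 l"
      using Suc.IH l' EE_sp[OF k l'] by simp
    also have "\<dots> = ai k + sp k *\<^sub>R D 0 l" by (simp add: EE_def algebra_simps)
    finally show ?thesis by simp
  qed
qed

lemma Q_int:
  assumes "1 \<le> k" "k \<le> m" "1 \<le> l" "l \<le> n"
  shows "Qf k l = D (k-1) (l-1)"
  using Q_int_aux[OF assms] assms by (simp add: Qf_def aa_def sg_def bb_def)

lemma Q_row0: "Qf 0 l = Qf 1 l + lam 0 *\<^sub>R (YY 0 - WW 0 *\<^sub>R Qf 1 l)"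
  using mn by (simp add: Qf_def aa_def sg_def sp1 algebra_simps)

lemma Q_rowm: "Qf (Suc m) l = Qf m l + lam m *\<^sub>R (YY m - WW m *\<^sub>R Qf m l)"
  using mn by (simp add: Qf_def aa_def sg_def algebra_simps)

lemma Q_col0: "Qf k 0 = Qf k 1 - sg k *\<^sub>R dd 0"
  using mn by (simp add: Qf_def bb_def algebra_simps)

lemma Q_coln: "Qf k (Suc n) = Qf k n + sg k *\<^sub>R dd n"
  using mn by (simp add: Qf_def bb_def algebra_simps)

lemma M1:
  assumes ij: "i \<le> m" "j \<le> n" and k: "k = i \<or> k = Suc i" and l: "l = j \<or> l = Suc j" "1 \<le> l" "l \<le> n"
  shows "hh (F i j) (Qf k l) = F i j $ 3"
proof -
  have int: "hh (F i j) (Qf k' l) = F i j $ 3" if k': "k' = i \<or> k' = Suc i" "1 \<le> k'" "k' \<le> m" for k'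
  proof -
    have e: "Qf k' l = D (k'-1) (l-1)" using Q_int[OF k'(2,3) l(2,3)] .
    obtain p q where pq: "p \<le> 1" "q \<le> 1" "i = k' - 1 + p" "j = l - 1 + q"
      using k'(1,2) l(1,2) by (metis One_nat_def add_0_right diff_Suc_1 le_add_diff_inverse2 le_numeral_extra(4) zero_le_one Suc_eq_plus1 le_Suc_eq)
    have "k' - 1 < m" "l - 1 < n" using k' l by auto
    then show ?thesis using ing'[of "k'-1" "l-1" p q] pq e by simp
  qed
  consider "1 \<le> k \<and> k \<le> m" | "k = 0" | "k = Suc m" using k ij by force
  then show ?thesis
  proof cases
    case 1
    then show ?thesis using int k by blast
  next
    case 2
    then have i0: "i = 0" using k by simp
    have a: "hh (F i j) (Qf 1 l) = F i j $ 3" using int[of 1] i0 mn by simp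
    have b: "hh (F i j) (YY 0) = WW 0 * F i j $ 3" using YW[of 0] ij i0 by simp
    show ?thesis using 2 a b by (simp add: Q_row0 hh_add hh_diff hh_scale i0 algebra_simps)
  next
    case 3
    then have im: "i = m" using k ij by simp
    have a: "hh (F i j) (Qf m l) = F i j $ 3" using int[of m] im mn by simp
    have b: "hh (F i j) (YY m) = WW m * F i j $ 3" using YW[of m] ij im by simp
    show ?thesis using 3 a b by (simp add: Q_rowm hh_add hh_diff hh_scale im algebra_simps)
  qed
qed

lemma M:
  assumes ij: "i \<le> m" "j \<le> n" and k: "k = i \<or> k = Suc i" and l: "l = j \<or> l = Suc j"
  shows "hh (F i j) (Qf k l) = F i j $ 3"
proof -
  consider "1 \<le> l \<and> l \<le> n" | "l = 0" | "l = Suc n" using l ij by force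
  then show ?thesis
  proof cases
    case 1
    then show ?thesis using M1 assms by blast
  next
    case 2
    then have j0: "j = 0" using l by simp
    have "hh (F i j) (Qf k 1) = F i j $ 3" using M1[OF ij k, of 1] j0 mn by simp
    moreover have "hh (F i j) (dd 0) = 0" using dd[of 0] ij j0 by simp
    ultimately show ?thesis using 2 by (simp add: Q_col0 hh_diff hh_scale)
  next
    case 3
    then have jn: "j = n" using l ij by simp
    have "hh (F i j) (Qf k n) = F i j $ 3" using M1[OF ij k, of n] jn mn by simp
    moreover have "hh (F i j) (dd n) = 0" using dd[of n] ij jn by simp
    ultimately show ?thesis using 3 by (simp add: Q_coln hh_add hh_scale)
  qed
qed


definition "dbb j = bb (Suc j) - bb j"
definition "DL i j = Qf (Suc i) j - Qf i j"

lemma dbb0: "dbb 0 = dd 0" using mn by (simp add: dbb_def bb_def)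
lemma dbb_mid: "1 \<le> j \<Longrightarrow> j < n \<Longrightarrow> dbb j = EE 0 j" by (simp add: dbb_def bb_def EE_def)
lemma dbbn: "dbb n = dd n" using mn by (simp add: dbb_def bb_def)

lemma DL_int: "1 \<le> i \<Longrightarrow> i < m \<Longrightarrow> 1 \<le> j \<Longrightarrow> j \<le> n \<Longrightarrow> DL i j = D i (j-1) - D (i-1) (j-1)"
  using Q_int[of i j] Q_int[of "Suc i" j] by (simp add: DL_def)

lemma DL_0: "DL i 0 = DL i 1 + (sg i - sg (Suc i)) *\<^sub>R dd 0"
  by (simp add: DL_def Q_col0 algebra_simps)

lemma DL_0j: "1 \<le> j \<Longrightarrow> j \<le> n \<Longrightarrow> DL 0 j = (- lam 0) *\<^sub>R ZZ 0 0 j"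
  using Q_int[of 1 j] mn by (simp add: DL_def Q_row0 ZZ_def algebra_simps)

lemma DL_mj: "1 \<le> j \<Longrightarrow> j \<le> n \<Longrightarrow> DL m j = lam m *\<^sub>R ZZ (m-1) 1 j"
  using Q_int[of m j] mn by (simp add: DL_def Q_rowm ZZ_def algebra_simps)

lemma indep_unscale2: "indep u (c *\<^sub>R v) \<Longrightarrow> c \<noteq> 0 \<Longrightarrow> indep u v"
  using indep_scale2[of u "c *\<^sub>R v" "1/c"] by simp

lemma indep_DL1:
  assumes i: "i \<le> m"
  shows "indep (dd 0) (DL i 1)"
proof -
  consider "i = 0" | "1 \<le> i \<and> i < m" | "i = m" using i by force
  then show ?thesis
  proof cases
    case 1
    have "indep (dd (0+0)) (ZZ 0 0 (Suc 0))" using corner[of 0 0 0 0] mn by simp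
    then show ?thesis using 1 DL_0j[of 1] mn lam(1)[of 0] by (simp add: indep_scale2 indep_scale2n)
  next
    case 2
    have "indep (dd (0+0)) (D i 0 - D (i-1) 0)" using colB[of i 0 0] 2 mn by simp
    then show ?thesis using DL_int[of i 1] 2 mn by simp
  next
    case 3
    have "indep (dd (0+0)) (ZZ (m-1) 1 (Suc 0))" using corner[of "m-1" 1 0 0] mn by simp
    then show ?thesis using 3 DL_mj[of 1] mn lam(1)[of m] by (simp add: indep_scale2 indep_scale2n)
  qed
qed

lemma indep_vertex:
  assumes i: "i \<le> m" and j: "j \<le> n"
  shows "indep (dbb j) (DL i j)"
proof -
  consider "j = 0" | "j = n" | "1 \<le> j \<and> j < n" using j by force
  then show ?thesis
  proof cases
    case 1
    then show ?thesis using indep_shear[OF indep_DL1[OF i]] by (simp add: dbb0 DL_0)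
  next
    case 2
    have e: "n - 1 + 1 = n" "Suc (n - 1) = n" using mn by auto
    consider "i = 0" | "1 \<le> i \<and> i < m" | "i = m" using i by force
    then show ?thesis
    proof cases
      case 1
      have "indep (dd (n-1+1)) (ZZ 0 0 (Suc (n-1)))" using corner[of 0 0 "n-1" 1] mn by simp
      then show ?thesis using 1 2 DL_0j[of n] mn lam(1)[of 0] e by (simp add: indep_scale2 indep_scale2n dbbn)
    next
      case 3
      have "indep (dd (n-1+1)) (ZZ (m-1) 1 (Suc (n-1)))" using corner[of "m-1" 1 "n-1" 1] mn by simp
      then show ?thesis using 3 2 DL_mj[of n] mn lam(1)[of m] e by (simp add: indep_scale2 indep_scale2n dbbn)
    next
      case 4: 2
      have "indep (dd (n-1+1)) (D i (n-1) - D (i-1) (n-1))" using colB[of i "n-1" 1] 4 mn by simp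
      then show ?thesis using DL_int[of i n] 4 2 mn e by (simp add: dbbn)
    qed
  next
    case 3
    then have jj: "1 \<le> j" "j < n" by auto
    consider "i = 0" | "1 \<le> i \<and> i < m" | "i = m" using i by force
    then show ?thesis
    proof cases
      case 1
      have "indep (ZZ 0 0 j) (D 0 j - D 0 (j-1))" using rz_ind[of 0 0 j] mn jj by simp
      then have "indep (EE 0 j) (ZZ 0 0 j)" by (simp add: EE_def indep_swap)
      then show ?thesis using 1 DL_0j[of j] jj lam(1)[of 0] dbb_mid[OF jj] by (simp add: indep_scale2 indep_scale2n)
    next
      case 2
      have "indep (DL i j) (EE (i-1) j)" using S'[of i j] 2 jj DL_int[of i j] by (simp add: EE_def)
      then have "indep (DL i j) (sp i *\<^sub>R EE 0 j)" using EE_sp[of i j] 2 jj by simp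
      then have "indep (DL i j) (EE 0 j)" using sp_pos[of i] 2 by (simp add: indep_unscale2)
      then show ?thesis using dbb_mid[OF jj] by (simp add: indep_swap)
    next
      case 3
      have mm: "m - 1 + 1 = m" "m - 1 < m" using mn by auto
      have "indep (ZZ (m-1) 1 j) (D (m-1) j - D (m-1) (j-1))" using rz_ind[of "m-1" 1 j] mn jj by simp
      then have "indep (ZZ (m-1) 1 j) (sp m *\<^sub>R EE 0 j)" using EE_sp[of m j] mn jj by (simp add: EE_def)
      then have "indep (ZZ (m-1) 1 j) (EE 0 j)" using sp_pos[of m] by (simp add: indep_unscale2)
      then have "indep (EE 0 j) (ZZ (m-1) 1 j)" by (simp add: indep_swap)
      then show ?thesis using 3 DL_mj[of j] jj lam(1)[of m] dbb_mid[OF jj] by (simp add: indep_scale2 indep_scale2n)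
    qed
  qed
qed

lemma Tdelta_DL: "Tdelta aa bb sg i j = DL i j"
  by (simp add: Tdelta_def DL_def Qf_def algebra_simps)

lemma vertex_ok:
  assumes i: "i \<le> m" and j: "j \<le> n"
  shows "det3 e3 (dbb j) (DL i j) \<noteq> 0 \<and> F i j = TP (Qf i j) (dbb j) (DL i j)"
proof (rule vertex_T)
  have m0: "hh (F i j) (Qf i j) = F i j $ 3" using M[OF i j] by simp
  have m1: "hh (F i j) (Qf (Suc i) j) = F i j $ 3" using M[OF i j] by simp
  have m2: "hh (F i j) (Qf i (Suc j)) = F i j $ 3" using M[OF i j] by simp
  show "hh (F i j) (Qf i j) = F i j $ 3" by (rule m0)
  show "hh (F i j) (DL i j) = 0" using m0 m1 by (simp add: DL_def hh_diff)
  have "Qf i (Suc j) - Qf i j = sg i *\<^sub>R dbb j" by (simp add: Qf_def dbb_def algebra_simps)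
  then have "sg i * hh (F i j) (dbb j) = 0" using m0 m2 by (metis hh_diff hh_scale diff_self)
  then show "hh (F i j) (dbb j) = 0" using sg_pos[of i] i by simp
  show "indep (dbb j) (DL i j)" using indep_vertex[OF i j] .
qed

lemma Trep_ok: "Trep F m n aa bb sg"
proof (rule Trep.intro)
  show "\<And>k. k \<le> Suc m \<Longrightarrow> 0 < sg k" using sg_pos by simp
  show "\<And>i j. i \<le> m \<Longrightarrow> j \<le> n \<Longrightarrow> det3 e3 (bb (Suc j) - bb j) (Tdelta aa bb sg i j) \<noteq> 0"
    using vertex_ok by (simp add: Tdelta_DL dbb_def)
  show "\<And>i j. i \<le> m \<Longrightarrow> j \<le> n \<Longrightarrow> F i j = Tpoint aa bb sg (aa i + sg i *\<^sub>R bb j) i j"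
    using vertex_ok by (simp add: Tpoint_TP Tdelta_DL dbb_def Qf_def)
  show "2 \<le> m" "2 \<le> n" using mn by auto
  show "is_net F m n" using net .
qed

end

lemma face_plane_T: "face_plane (\<lambda>i j. F j i) a b = face_plane F b a"
proof -
  have "{F b a, F b (Suc a), F (Suc b) (Suc a), F (Suc b) a} = {F b a, F (Suc b) a, F (Suc b) (Suc a), F b (Suc a)}"
    by auto
  then show ?thesis by (simp add: face_plane_def)
qed

lemma adm_swap: "admissible_angle V Q1 Q2 Q3 Q4 \<Longrightarrow> admissible_angle V Q2 Q1 Q4 Q3"
proof -
  assume a: "admissible_angle V Q1 Q2 Q3 Q4"
  have e: "{Q2, Q1, Q4, Q3} = {Q1, Q2, Q3, Q4}" by auto
  have c0: "convex_quad Q1 Q2 Q3 Q4" using a unfolding admissible_angle_def by blast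
  have c: "convex_quad Q2 Q1 Q4 Q3" using cq_rot[OF cq_rot[OF cq_rot[OF cq_rev[OF c0]]]] .
  have h: "hedral_angle V Q2 Q1 Q4 Q3 = hedral_angle V Q1 Q2 Q3 Q4" unfolding hedral_angle_def e ..
  show ?thesis using a c unfolding admissible_angle_def h e by blast
qed

lemma gen_T_net_T:
  assumes "gen_T_net F m n"
  shows "gen_T_net (\<lambda>i j. F j i) n m"
proof -
  let ?G = "\<lambda>i j. F j i"
  have net: "is_net F m n" and dc: "dual_convex F m n"
    and r: "\<forall>i\<le>m. lies_in_plane {F i j | j. j \<le> n}" and c: "\<forall>j\<le>n. lies_in_plane {F i j | i. i \<le> m}"
    and iso: "(\<forall>i\<le>m. lies_in_isotropic_plane {F i j | j. j \<le> n}) \<or> (\<forall>j\<le>n. lies_in_isotropic_plane {F i j | i. i \<le> m})"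
    using assms unfolding gen_T_net_def by blast+
  have "is_net ?G n m" unfolding is_net_def
  proof (intro allI impI)
    fix i j assume "i < n" "j < m"
    then have "convex_quad (F j i) (F (Suc j) i) (F (Suc j) (Suc i)) (F j (Suc i))"
      using net unfolding is_net_def by blast
    then show "convex_quad (?G i j) (?G (Suc i) j) (?G (Suc i) (Suc j)) (?G i (Suc j))"
      by (rule cq_rev)
  qed
  moreover have "dual_convex ?G n m"
    unfolding dual_convex_def
  proof (intro conjI allI impI)
    have "2 \<le> m \<and> 2 \<le> n" using dc unfolding dual_convex_def by blast
    then show "2 \<le> n" "2 \<le> m" by auto
    fix i j assume ij: "0 < i \<and> i < n \<and> 0 < j \<and> j < m"
    then obtain V Q1 Q2 Q3 Q4 where w: "admissible_angle V Q1 Q2 Q3 Q4"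
      "face_plane F (j-1) (i-1) = affine hull {V, Q1, Q2}" "face_plane F j (i-1) = affine hull {V, Q2, Q3}"
      "face_plane F j i = affine hull {V, Q3, Q4}" "face_plane F (j-1) i = affine hull {V, Q4, Q1}"
      using dc unfolding dual_convex_def by blast
    have s: "{V, Q1, Q2} = {V, Q2, Q1}" "{V, Q4, Q1} = {V, Q1, Q4}" "{V, Q3, Q4} = {V, Q4, Q3}"
            "{V, Q2, Q3} = {V, Q3, Q2}" by auto
    show "\<exists>V Q1 Q2 Q3 Q4. admissible_angle V Q1 Q2 Q3 Q4 \<and>
           face_plane ?G (i-1) (j-1) = affine hull {V, Q1, Q2} \<and>
           face_plane ?G i (j-1) = affine hull {V, Q2, Q3} \<and>
           face_plane ?G i j = affine hull {V, Q3, Q4} \<and>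
           face_plane ?G (i-1) j = affine hull {V, Q4, Q1}"
    proof (intro exI conjI)
      show "admissible_angle V Q2 Q1 Q4 Q3" using adm_swap[OF w(1)] .
      show "face_plane ?G (i-1) (j-1) = affine hull {V, Q2, Q1}" unfolding face_plane_T[of F] w(2) s(1) ..
      show "face_plane ?G i (j-1) = affine hull {V, Q1, Q4}" unfolding face_plane_T[of F] w(5) s(2) ..
      show "face_plane ?G i j = affine hull {V, Q4, Q3}" unfolding face_plane_T[of F] w(4) s(3) ..
      show "face_plane ?G (i-1) j = affine hull {V, Q3, Q2}" unfolding face_plane_T[of F] w(3) s(4) ..
    qed
  qed
  moreover have "\<forall>i\<le>n. lies_in_plane {?G i j | j. j \<le> m}" using c by blast
  moreover have "\<forall>j\<le>m. lies_in_plane {?G i j | i. i \<le> n}" using r by blast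
  moreover have "(\<forall>i\<le>n. lies_in_isotropic_plane {?G i j | j. j \<le> m}) \<or>
                 (\<forall>j\<le>m. lies_in_isotropic_plane {?G i j | i. i \<le> n})" using iso by blast
  ultimately show ?thesis unfolding gen_T_net_def by blast
qed

lemma vertex_faces:
  assumes dc: "dual_convex F m n" and ij: "0 < i" "i < m" "0 < j" "j < n"
  shows "face_plane F (i-1) (j-1) = gr (face_dual F (i-1) (j-1)) \<and> face_plane F i (j-1) = gr (face_dual F i (j-1)) \<and>
         face_plane F i j = gr (face_dual F i j) \<and> face_plane F (i-1) j = gr (face_dual F (i-1) j) \<and>
         S123 (face_dual F (i-1) (j-1)) (face_dual F i (j-1)) (face_dual F i j) (face_dual F (i-1) j)"
proof -
  obtain V Q1 Q2 Q3 Q4 where w: "admissible_angle V Q1 Q2 Q3 Q4"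
      "face_plane F (i-1) (j-1) = affine hull {V, Q1, Q2}" "face_plane F i (j-1) = affine hull {V, Q2, Q3}"
      "face_plane F i j = affine hull {V, Q3, Q4}" "face_plane F (i-1) j = affine hull {V, Q4, Q1}"
    using dc ij unfolding dual_convex_def by blast
  obtain D1 D2 D3 D4 where D: "affine hull {V, Q1, Q2} = gr D1" "affine hull {V, Q2, Q3} = gr D2"
      "affine hull {V, Q3, Q4} = gr D3" "affine hull {V, Q4, Q1} = gr D4" "S123 D1 D2 D3 D4"
    using vertex_lemma[OF w(1)] by blast
  have fd: "face_dual F (i-1) (j-1) = D1" "face_dual F i (j-1) = D2" "face_dual F i j = D3" "face_dual F (i-1) j = D4"
    unfolding face_dual_def w(2-5) D(1-4) plane_dual_gr by simp_all
  show ?thesis unfolding fd w(2-5) D(1-4) using D(5) by simp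
qed

lemma all_faces:
  assumes dc: "dual_convex F m n" and ij: "i < m" "j < n"
  shows "face_plane F i j = gr (face_dual F i j)"
proof -
  have "2 \<le> m \<and> 2 \<le> n" using dc unfolding dual_convex_def by blast
  then have mn: "2 \<le> m" "2 \<le> n" by auto
  define i' where "i' = (if Suc i < m then Suc i else i)"
  define j' where "j' = (if Suc j < n then Suc j else j)"
  have i': "0 < i'" "i' < m" "i = i' - 1 \<or> i = i'" using ij mn by (auto simp: i'_def)
  have j': "0 < j'" "j' < n" "j = j' - 1 \<or> j = j'" using ij mn by (auto simp: j'_def)
  note v = vertex_faces[OF dc i'(1,2) j'(1,2)]
  show ?thesis
  proof (cases "i = i' - 1")
    case True
    show ?thesis
    proof (cases "j = j' - 1")
      case True
      then show ?thesis using v \<open>i = i' - 1\<close> by simp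
    next
      case False
      then have "j = j'" using j'(3) by simp
      then show ?thesis using v \<open>i = i' - 1\<close> by simp
    qed
  next
    case False
    then have ii: "i = i'" using i'(3) by simp
    show ?thesis
    proof (cases "j = j' - 1")
      case True
      then show ?thesis using v ii by simp
    next
      case False
      then have "j = j'" using j'(3) by simp
      then show ?thesis using v ii by simp
    qed
  qed
qed

lemma GT_of:
  assumes g: "gen_T_net F m n" and iso: "\<forall>j\<le>n. lies_in_isotropic_plane {F i j | i. i \<le> m}"
  shows "GT F m n (face_dual F)"
proof -
  have net: "is_net F m n" and dc: "dual_convex F m n"
    and r: "\<forall>i\<le>m. lies_in_plane {F i j | j. j \<le> n}"
    using g unfolding gen_T_net_def by auto
  have "2 \<le> m \<and> 2 \<le> n" using dc unfolding dual_convex_def by blast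
  then have mn: "2 \<le> m" "2 \<le> n" by auto
  show ?thesis
  proof (rule GT.intro)
    show "2 \<le> m" "2 \<le> n" "is_net F m n" using mn net by auto
    fix i j assume ij: "i < m" "j < n"
    have fp: "face_plane F i j = gr (face_dual F i j)" using all_faces[OF dc ij] .
    have "{F i j, F (Suc i) j, F (Suc i) (Suc j), F i (Suc j)} \<subseteq> face_plane F i j"
      unfolding face_plane_def by (rule hull_subset)
    then show "F i j \<in> gr (face_dual F i j) \<and> F (Suc i) j \<in> gr (face_dual F i j) \<and>
               F (Suc i) (Suc j) \<in> gr (face_dual F i j) \<and> F i (Suc j) \<in> gr (face_dual F i j)"
      using fp by auto
  next
    fix i j assume "0 < i" "i < m" "0 < j" "j < n"
    then show "S123 (face_dual F (i-1) (j-1)) (face_dual F i (j-1)) (face_dual F i j) (face_dual F (i-1) j)"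
      using vertex_faces[OF dc] by blast
  next
    fix j assume j: "j \<le> n"
    then obtain a c where a: "a \<noteq> 0" "a$3 = 0" "{F i j | i. i \<le> m} \<subseteq> {x. a \<bullet> x = c}"
      using iso unfolding lies_in_isotropic_plane_def by blast
    define d :: point where "d = vector [a$1, a$2, c]"
    have "d \<noteq> 0"
    proof
      assume "d = 0"
      moreover have "d$1 = a$1" "d$2 = a$2" by (simp_all add: d_def)
      ultimately have "a$1 = 0" "a$2 = 0" by simp_all
      then have "a = 0" using a(2) by (simp add: vec_eq_iff forall_3)
      then show False using a(1) by simp
    qed
    moreover have "\<forall>i\<le>m. hh (F i j) d = 0"
    proof (intro allI impI)
      fix i assume "i \<le> m"
      then have "a \<bullet> F i j = c" using a(3) by blast
      then have "a$1 * F i j $ 1 + a$2 * F i j $ 2 = c" using a(2) by (simp add: inner3)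
      then show "hh (F i j) d = 0" by (simp add: hh_def d_def algebra_simps)
    qed
    ultimately show "\<exists>d. d \<noteq> 0 \<and> (\<forall>i\<le>m. hh (F i j) d = 0)" by blast
  next
    fix i assume i: "i \<le> m"
    then obtain a c where a: "a \<noteq> 0" "{F i j | j. j \<le> n} \<subseteq> {x. a \<bullet> x = c}"
      using r unfolding lies_in_plane_def by blast
    define Y :: point where "Y = vector [- a$1, - a$2, - c]"
    have "Y \<noteq> 0 \<or> a$3 \<noteq> 0"
    proof (rule ccontr)
      assume "\<not> (Y \<noteq> 0 \<or> a$3 \<noteq> 0)"
      then have "Y = 0" "a$3 = 0" by auto
      moreover have "Y$1 = - a$1" "Y$2 = - a$2" by (simp_all add: Y_def)
      ultimately have "a$1 = 0" "a$2 = 0" by simp_all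
      then have "a = 0" using \<open>a$3 = 0\<close> by (simp add: vec_eq_iff forall_3)
      then show False using a(1) by simp
    qed
    moreover have "\<forall>j\<le>n. hh (F i j) Y = a$3 * F i j $ 3"
    proof (intro allI impI)
      fix j assume "j \<le> n"
      then have "a \<bullet> F i j = c" using a(2) by blast
      then have "a$1 * F i j $ 1 + a$2 * F i j $ 2 + a$3 * F i j $ 3 = c" by (simp add: inner3)
      moreover have "hh (F i j) Y = - (a$1 * F i j $ 1) - a$2 * F i j $ 2 + c" by (simp add: hh_def Y_def algebra_simps)
      ultimately show "hh (F i j) Y = a$3 * F i j $ 3" by linarith
    qed
    ultimately show "\<exists>Y \<omega>. (Y \<noteq> 0 \<or> \<omega> \<noteq> 0) \<and> (\<forall>j\<le>n. hh (F i j) Y = \<omega> * F i j $ 3)" by blast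
  qed
qed

lemma main_col:
  assumes "gen_T_net F m n" "\<forall>j\<le>n. lies_in_isotropic_plane {F i j | i. i \<le> m}"
  shows "T_representation F m n"
proof -
  interpret G: GT F m n "face_dual F" using GT_of[OF assms] .
  interpret T: Trep F m n G.aa G.bb G.sg using G.Trep_ok .
  show ?thesis using T.T_rep .
qed

theorem proposition4:
  fixes F :: "nat \<Rightarrow> nat \<Rightarrow> real^3" and m n :: nat
  assumes "gen_T_net F m n"
  shows "T_representation F m n \<or> T_representation (\<lambda>i j. F j i) n m"
proof -
  have iso: "(\<forall>i\<le>m. lies_in_isotropic_plane {F i j | j. j \<le> n}) \<or> (\<forall>j\<le>n. lies_in_isotropic_plane {F i j | i. i \<le> m})"
    using assms unfolding gen_T_net_def by auto
  then show ?thesis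
  proof
    assume "\<forall>j\<le>n. lies_in_isotropic_plane {F i j | i. i \<le> m}"
    then show ?thesis using main_col[OF assms] by blast
  next
    assume r: "\<forall>i\<le>m. lies_in_isotropic_plane {F i j | j. j \<le> n}"
    have "T_representation (\<lambda>i j. F j i) n m"
      using main_col[OF gen_T_net_T[OF assms]] r by simp
    then show ?thesis by blast
  qed
qed


end
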